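(* Let $C>0$, take $n\sim CM\log M$ (as $M\to\infty$), and draw the entries of an $M\times n$ matrix $\Phi=\{\varphi_i\}_{i=1}^n$ independently from $\mathbb{C}\mathcal{N}(0,\frac1M)$. Then for each proportion $\alpha<1-\frac{1}{2C}$ there exists a constant $C'>0$ such that \[ \mathrm{PU}(\Phi;\alpha)\geq\frac{C'}{M} \] with overwhelming probability.
   Context: $\mathbb{C}\mathcal{N}(0,\sigma^2)$ is the complex Gaussian with independent $\mathcal{N}(0,\sigma^2/2)$ real and imaginary parts. "With overwhelming probability" means with probability at least $1-c_0\mathrm{e}^{-c_1M}$ for constants $c_0,c_1>0$ independent of $M$. The $\alpha$-projective uniformity of $\Phi=\{\varphi_i\}_{i=1}^n\subseteq\mathbb{C}^M$ is \[ \mathrm{PU}(\Phi;\alpha)=\min_{x\in\mathbb{C}^M,\ \|x\|=1}\ \max_{\mathcal{I}\subseteq\{1,\dots,n\},\ |\mathcal{I}|\geq\alpha n}\ \min_{i\in\mathcal{I}}|\langle x,\varphi_i\rangle|^2 . \] *)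

theory Defs
  imports "HOL-Probability.Probability" "HOL-Library.Landau_Symbols"
begin

text \<open>Complex Gaussian CN(0, s2): real and imaginary parts independent N(0, s2/2).
  normal_density mu sigma uses the standard deviation sigma.\<close>
definition cgauss :: "real \<Rightarrow> complex measure" where
  "cgauss s2 =
     distr (density lborel (normal_density 0 (sqrt (s2 / 2)))
              \<Otimes>\<^sub>M density lborel (normal_density 0 (sqrt (s2 / 2))))
           borel (\<lambda>(a, b). Complex a b)"

text \<open>A matrix is a function Phi on index pairs (j, i), j < M the coordinate (row),
  i < n the column; the column vector phi_i is (\<lambda>j. Phi (j, i)).\<close>
definition gauss_matrix :: "nat \<Rightarrow> nat \<Rightarrow> (nat \<times> nat \<Rightarrow> complex) measure" where
  "gauss_matrix M n = PiM ({..<M} \<times> {..<n}) (\<lambda>_. cgauss (1 / real M))"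

definition cinner :: "nat \<Rightarrow> (nat \<Rightarrow> complex) \<Rightarrow> (nat \<Rightarrow> complex) \<Rightarrow> complex" where
  "cinner M x y = (\<Sum>j<M. x j * cnj (y j))"

definition unit_vecs :: "nat \<Rightarrow> (nat \<Rightarrow> complex) set" where
  "unit_vecs M = {x. (\<Sum>j<M. (cmod (x j))\<^sup>2) = 1}"

definition PU :: "nat \<Rightarrow> nat \<Rightarrow> (nat \<times> nat \<Rightarrow> complex) \<Rightarrow> real \<Rightarrow> real" where
  "PU M n Phi \<alpha> =
     Inf ((\<lambda>x. Sup ((\<lambda>I. Min ((\<lambda>i. (cmod (cinner M x (\<lambda>j. Phi (j, i))))\<^sup>2) ` I))
                     ` {I. I \<subseteq> {..<n} \<and> real (card I) \<ge> \<alpha> * real n}))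
          ` unit_vecs M)"

end

theory Submission
  imports Defs "HOL-Real_Asymp.Real_Asymp"
begin

definition nd :: "real \<Rightarrow> real measure" where
  "nd s = density lborel (normal_density 0 s)"

lemma nd_prob: "0 < s \<Longrightarrow> prob_space (nd s)"
  unfolding nd_def by (rule prob_space_normal_density)

lemma sets_nd[simp, measurable_cong]: "sets (nd s) = sets borel"
  by (simp add: nd_def)

lemma space_nd[simp]: "space (nd s) = UNIV"
  by (simp add: nd_def)

lemma meas_Complex: "(\<lambda>(a, b). Complex a b) \<in> borel_measurable (borel \<Otimes>\<^sub>M borel)"
proof -
  have "(\<lambda>(a, b). Complex a b) = (\<lambda>p. complex_of_real (fst p) + \<i> * complex_of_real (snd p))"
    by (auto simp: Complex_eq)
  moreover have "(\<lambda>p. complex_of_real (fst p) + \<i> * complex_of_real (snd p)) \<in> borel_measurable (borel \<Otimes>\<^sub>M (borel::real measure))"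
    by measurable
  ultimately show ?thesis by simp
qed

lemma cgauss_prob: "0 < s2 \<Longrightarrow> prob_space (cgauss s2)"
proof -
  assume s: "0 < s2"
  interpret N: prob_space "nd (sqrt (s2/2))" using nd_prob s by simp
  interpret P: pair_prob_space "nd (sqrt (s2/2))" "nd (sqrt (s2/2))" by unfold_locales
  show ?thesis unfolding cgauss_def nd_def[symmetric]
    apply (rule P.prob_space_distr)
    using meas_Complex measurable_cong_sets[OF sets_pair_measure_cong[OF sets_nd sets_nd] refl] by simp
qed

lemma cgauss_rect:
  assumes s: "0 < s2" and A[measurable]: "A \<in> sets borel" and B[measurable]: "B \<in> sets borel"
  shows "emeasure (cgauss s2) {z. Re z \<in> A \<and> Im z \<in> B}
       = emeasure (nd (sqrt (s2/2))) A * emeasure (nd (sqrt (s2/2))) B"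
proof -
  let ?s = "sqrt (s2/2)"
  interpret N: prob_space "nd ?s" using nd_prob s by simp
  have meas: "(\<lambda>(a, b). Complex a b) \<in> borel_measurable (nd ?s \<Otimes>\<^sub>M nd ?s)"
    using meas_Complex measurable_cong_sets[OF sets_pair_measure_cong[OF sets_nd sets_nd] refl] by simp
  have S: "{z. Re z \<in> A \<and> Im z \<in> B} \<in> sets borel" by measurable
  have "emeasure (cgauss s2) {z. Re z \<in> A \<and> Im z \<in> B} =
     emeasure (nd ?s \<Otimes>\<^sub>M nd ?s) ((\<lambda>(a, b). Complex a b) -` {z. Re z \<in> A \<and> Im z \<in> B} \<inter> space (nd ?s \<Otimes>\<^sub>M nd ?s))"
    unfolding cgauss_def nd_def[symmetric] by (rule emeasure_distr[OF meas S])
  also have "(\<lambda>(a, b). Complex a b) -` {z. Re z \<in> A \<and> Im z \<in> B} \<inter> space (nd ?s \<Otimes>\<^sub>M nd ?s) = A \<times> B"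
    by (auto simp: space_pair_measure)
  also have "emeasure (nd ?s \<Otimes>\<^sub>M nd ?s) (A \<times> B) = emeasure (nd ?s) A * emeasure (nd ?s) B"
    by (rule N.emeasure_pair_measure_Times) auto
  finally show ?thesis .
qed

lemma cgauss_Re:
  assumes s: "0 < s2" and A[measurable]: "A \<in> sets borel"
  shows "emeasure (cgauss s2) {z. Re z \<in> A} = emeasure (nd (sqrt (s2/2))) A"
proof -
  interpret N: prob_space "nd (sqrt (s2/2))" using nd_prob s by simp
  have "{z. Re z \<in> A} = {z. Re z \<in> A \<and> Im z \<in> UNIV}" by simp
  also have "emeasure (cgauss s2) \<dots> = emeasure (nd (sqrt (s2/2))) A * emeasure (nd (sqrt (s2/2))) UNIV"
    by (rule cgauss_rect) (use s in auto)
  finally show ?thesis using N.emeasure_space_1 by simp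
qed

lemma cgauss_Im:
  assumes s: "0 < s2" and A[measurable]: "A \<in> sets borel"
  shows "emeasure (cgauss s2) {z. Im z \<in> A} = emeasure (nd (sqrt (s2/2))) A"
proof -
  interpret N: prob_space "nd (sqrt (s2/2))" using nd_prob s by simp
  have "{z. Im z \<in> A} = {z. Re z \<in> UNIV \<and> Im z \<in> A}" by simp
  also have "emeasure (cgauss s2) \<dots> = emeasure (nd (sqrt (s2/2))) UNIV * emeasure (nd (sqrt (s2/2))) A"
    by (rule cgauss_rect) (use s in auto)
  finally show ?thesis using N.emeasure_space_1 by simp
qed

lemma sets_cgauss[simp, measurable_cong]: "sets (cgauss s2) = sets borel"
  by (simp add: cgauss_def)

lemma space_cgauss[simp]: "space (cgauss s2) = UNIV"
  by (simp add: cgauss_def)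

lemma gm_prob: "0 < M \<Longrightarrow> prob_space (gauss_matrix M N)"
  unfolding gauss_matrix_def by (rule prob_space_PiM) (rule cgauss_prob, simp)

lemma space_gm: "space (gauss_matrix M N) = ({..<M}\<times>{..<N}) \<rightarrow>\<^sub>E UNIV"
  by (simp add: gauss_matrix_def space_PiM)

definition XX :: "(nat \<times> nat) \<times> bool \<Rightarrow> (nat \<times> nat \<Rightarrow> complex) \<Rightarrow> real" where
  "XX t \<omega> = (if snd t then Re (\<omega> (fst t)) else Im (\<omega> (fst t)))"

lemma comp_meas[measurable]:
  "p \<in> {..<M}\<times>{..<N} \<Longrightarrow> (\<lambda>\<omega>. \<omega> p) \<in> measurable (gauss_matrix M N) borel"
  unfolding gauss_matrix_def
  using measurable_component_singleton[of p "{..<M}\<times>{..<N}" "\<lambda>_. cgauss (1/real M)"]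
        measurable_cong_sets[OF refl sets_cgauss]
  by auto

lemma XX_meas[measurable]: "fst t \<in> {..<M}\<times>{..<N} \<Longrightarrow> XX t \<in> borel_measurable (gauss_matrix M N)"
  unfolding XX_def by (cases "snd t") (simp_all add: comp_meas)

lemma XX_distr:
  assumes M: "0 < M" and t: "fst t \<in> {..<M}\<times>{..<N}"
  shows "distributed (gauss_matrix M N) lborel (XX t) (normal_density 0 (sqrt (1/real M/2)))"
proof -
  let ?I = "{..<M}\<times>{..<N}" let ?s2 = "1/real M"
  let ?P = "gauss_matrix M N" let ?n = "nd (sqrt (?s2/2))"
  interpret P: prob_space ?P by (rule gm_prob[OF M])
  interpret C: prob_space "cgauss ?s2" using cgauss_prob M by simp
  interpret PP: product_prob_space "\<lambda>_. cgauss ?s2" ?I by unfold_locales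
  have PiM: "?P = PiM ?I (\<lambda>_. cgauss ?s2)" by (simp add: gauss_matrix_def)
  have s2: "0 < ?s2" using M by simp
  have "distr ?P lborel (XX t) = ?n"
  proof (rule measure_eqI)
    show "sets (distr ?P lborel (XX t)) = sets ?n" by simp
  next
    fix A assume "A \<in> sets (distr ?P lborel (XX t))"
    then have A[measurable]: "A \<in> sets borel" by simp
    have "emeasure (distr ?P lborel (XX t)) A = emeasure ?P (XX t -` A \<inter> space ?P)"
      by (rule emeasure_distr) (use t in auto)
    also have "\<dots> = emeasure ?n A"
    proof (cases "snd t")
      case True
      have eq: "XX t -` A \<inter> space ?P = {\<omega>\<in>space (PiM ?I (\<lambda>_. cgauss ?s2)). \<omega> (fst t) \<in> {z. Re z \<in> A}}"
        using True by (auto simp: XX_def PiM)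
      have S: "{z. Re z \<in> A} \<in> sets (cgauss ?s2)" by simp
      have "emeasure ?P (XX t -` A \<inter> space ?P) = emeasure (cgauss ?s2) {z. Re z \<in> A}"
        unfolding eq unfolding PiM by (rule PP.emeasure_PiM_Collect_single[OF t S])
      then show ?thesis using cgauss_Re[OF s2 A] by simp
    next
      case False
      have eq: "XX t -` A \<inter> space ?P = {\<omega>\<in>space (PiM ?I (\<lambda>_. cgauss ?s2)). \<omega> (fst t) \<in> {z. Im z \<in> A}}"
        using False by (auto simp: XX_def PiM)
      have S: "{z. Im z \<in> A} \<in> sets (cgauss ?s2)" by simp
      have "emeasure ?P (XX t -` A \<inter> space ?P) = emeasure (cgauss ?s2) {z. Im z \<in> A}"
        unfolding eq unfolding PiM by (rule PP.emeasure_PiM_Collect_single[OF t S])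
      then show ?thesis using cgauss_Im[OF s2 A] by simp
    qed
    finally show "emeasure (distr ?P lborel (XX t)) A = emeasure ?n A" .
  qed
  then show ?thesis unfolding distributed_def nd_def using t by simp
qed

lemma XX_emeasure:
  assumes M: "0 < M" and t: "fst t \<in> {..<M}\<times>{..<N}" and A: "A \<in> sets borel"
  shows "emeasure (gauss_matrix M N) (XX t -` A \<inter> space (gauss_matrix M N)) = emeasure (nd (sqrt (1/real M/2))) A"
proof -
  have "distr (gauss_matrix M N) lborel (XX t) = nd (sqrt (1/real M/2))"
    using XX_distr[OF M t] unfolding distributed_def nd_def by simp
  moreover have "emeasure (distr (gauss_matrix M N) lborel (XX t)) A = emeasure (gauss_matrix M N) (XX t -` A \<inter> space (gauss_matrix M N))"
    by (rule emeasure_distr) (use t A in auto)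
  ultimately show ?thesis by simp
qed

lemma XX_indep:
  assumes M: "0 < M" and N: "0 < N"
  shows "prob_space.indep_vars (gauss_matrix M N) (\<lambda>_. borel) XX (({..<M}\<times>{..<N})\<times>UNIV)"
proof -
  let ?I = "{..<M}\<times>{..<N}" let ?T = "?I \<times> (UNIV::bool set)" let ?s2 = "1/real M"
  let ?P = "gauss_matrix M N" let ?n = "nd (sqrt (?s2/2))"
  interpret P: prob_space ?P by (rule gm_prob[OF M])
  interpret C: prob_space "cgauss ?s2" using cgauss_prob M by simp
  interpret PP: product_prob_space "\<lambda>_. cgauss ?s2" ?I by unfold_locales
  have PiM: "?P = PiM ?I (\<lambda>_. cgauss ?s2)" by (simp add: gauss_matrix_def)
  have s2: "0 < ?s2" using M by simp
  show ?thesis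
  proof (subst P.indep_vars_finite[where E="\<lambda>_. sets borel"], goal_cases)
    case 1 show ?case using M N by auto
  next
    case 2 show ?case by simp
  next
    case 3 show ?case by (metis sets.sigma_sets_eq space_borel)
  next
    case (4 t) then have "fst t \<in> ?I" by auto then show ?case by (rule XX_meas)
  next
    case 5 show ?case by (auto simp: Int_stable_def)
  next
    case 6 show ?case by simp
  next
    case 7 show ?case using sets.space_closed by auto
  next
    case 8
    show ?case
    proof
      fix A :: "(nat \<times> nat) \<times> bool \<Rightarrow> real set" assume A: "A \<in> (\<Pi> t\<in>?T. sets borel)"
      define B where "B p = {z. Re z \<in> A (p, True) \<and> Im z \<in> A (p, False)}" for p
      have Ab: "A (p, b) \<in> sets borel" if "p \<in> ?I" for p b using A that by auto
      have Bs: "B p \<in> sets (cgauss ?s2)" if "p \<in> ?I" for p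
        using Ab[OF that] unfolding B_def by measurable
      have 1: "(\<Inter>j\<in>?T. XX j -` A j \<inter> space ?P) = {\<omega>\<in>space (PiM ?I (\<lambda>_. cgauss ?s2)). \<forall>p\<in>?I. \<omega> p \<in> B p}"
      proof -
        obtain p0 where p0: "p0 \<in> ?I" using M N by auto
        have T0: "(p0,True) \<in> ?T" using p0 by simp
        have hia: "(\<Inter>j\<in>?T. XX j -` A j \<inter> space ?P) = {\<omega>\<in>space ?P. \<forall>j\<in>?T. XX j \<omega> \<in> A j}"
          using T0 by blast
        have hib: "(\<forall>j\<in>?T. XX j \<omega> \<in> A j) \<longleftrightarrow> (\<forall>p\<in>?I. \<omega> p \<in> B p)" for \<omega>
        proof
          assume "\<forall>j\<in>?T. XX j \<omega> \<in> A j"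
          then show "\<forall>p\<in>?I. \<omega> p \<in> B p" unfolding B_def
            by (metis (no_types, lifting) XX_def UNIV_I mem_Collect_eq mem_Sigma_iff fst_conv snd_conv)
        next
          assume a: "\<forall>p\<in>?I. \<omega> p \<in> B p"
          show "\<forall>j\<in>?T. XX j \<omega> \<in> A j"
          proof
            fix j assume "j \<in> ?T"
            then obtain p b where j: "j = (p,b)" "p \<in> ?I" by auto
            then show "XX j \<omega> \<in> A j" using a unfolding B_def XX_def by (cases b) auto
          qed
        qed
        show ?thesis unfolding hia unfolding hib unfolding PiM ..
      qed
      have L: "emeasure ?P (\<Inter>j\<in>?T. XX j -` A j \<inter> space ?P) = (\<Prod>p\<in>?I. emeasure ?n (A (p,True)) * emeasure ?n (A (p,False)))"
      proof -
        have L1: "emeasure (PiM ?I (\<lambda>_. cgauss ?s2)) {\<omega>\<in>space (PiM ?I (\<lambda>_. cgauss ?s2)). \<forall>p\<in>?I. \<omega> p \<in> B p}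
            = (\<Prod>p\<in>?I. emeasure (cgauss ?s2) (B p))"
          by (rule PP.emeasure_PiM_Collect) (use Bs in auto)
        have L2: "emeasure (cgauss ?s2) (B p) = emeasure ?n (A (p,True)) * emeasure ?n (A (p,False))"
          if "p \<in> ?I" for p
          unfolding B_def by (rule cgauss_rect[OF s2 Ab[OF that] Ab[OF that]])
        show ?thesis unfolding 1 unfolding PiM L1 by (rule prod.cong[OF refl L2])
      qed
      have E: "emeasure ?P (XX (p,b) -` A (p,b) \<inter> space ?P) = (if b then emeasure ?n (A (p,True)) else emeasure ?n (A (p,False)))"
        if p: "p \<in> ?I" for p b
        using XX_emeasure[OF M _ Ab[OF p], of "(p,b)"] p by (cases b) auto
      have R: "(\<Prod>t\<in>?T. emeasure ?P (XX t -` A t \<inter> space ?P)) = (\<Prod>p\<in>?I. emeasure ?n (A (p,True)) * emeasure ?n (A (p,False)))"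
      proof -
        have "(\<Prod>t\<in>?T. emeasure ?P (XX t -` A t \<inter> space ?P)) = (\<Prod>p\<in>?I. \<Prod>b\<in>UNIV. emeasure ?P (XX (p,b) -` A (p,b) \<inter> space ?P))"
          by (subst prod.cartesian_product) (simp add: case_prod_beta')
        also have "\<dots> = (\<Prod>p\<in>?I. emeasure ?n (A (p,True)) * emeasure ?n (A (p,False)))"
          by (intro prod.cong refl) (simp add: UNIV_bool E mult.commute)
        finally show ?thesis .
      qed
      have "ennreal (P.prob (\<Inter>j\<in>?T. XX j -` A j \<inter> space ?P)) = ennreal (\<Prod>j\<in>?T. P.prob (XX j -` A j \<inter> space ?P))"
        using L R by (simp add: P.emeasure_eq_measure prod_ennreal)
      then show "P.prob (\<Inter>j\<in>?T. XX j -` A j \<inter> space ?P) = (\<Prod>j\<in>?T. P.prob (XX j -` A j \<inter> space ?P))"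
        by (simp add: prod_nonneg)
    qed
  qed
qed

lemma nd_le: assumes s: "0 < s" shows "normal_density 0 s x \<le> 1 / (2 * s)"
proof -
  have "2 * s = sqrt ((2 * s)\<^sup>2)" using s by (metis abs_of_pos real_sqrt_abs mult_pos_pos zero_less_numeral)
  also have "\<dots> \<le> sqrt (2 * pi * s\<^sup>2)"
    using pi_gt3 s by (intro real_sqrt_le_mono) (simp add: power2_eq_square)
  finally have q: "2 * s \<le> sqrt (2 * pi * s\<^sup>2)" .
  have "normal_density 0 s x \<le> 1 / sqrt (2 * pi * s\<^sup>2) * 1"
    unfolding normal_density_def by (intro mult_left_mono) (auto)
  also have "\<dots> \<le> 1 / (2 * s)" using q s by (simp add: frac_le)
  finally show ?thesis .
qed

lemma normal_small_ball:
  assumes P: "prob_space P" and D: "distributed P lborel Y (normal_density 0 s)"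
    and s: "0 < s" and r: "0 \<le> r"
  shows "measure P {\<omega>\<in>space P. \<bar>Y \<omega>\<bar> < r} \<le> r / s"
proof -
  interpret P: prob_space P by (rule P)
  have eq: "{\<omega>\<in>space P. \<bar>Y \<omega>\<bar> < r} = Y -` {-r<..<r} \<inter> space P" by auto
  have "emeasure P (Y -` {-r<..<r} \<inter> space P) = (\<integral>\<^sup>+x. ennreal (normal_density 0 s x) * indicator {-r<..<r} x \<partial>lborel)"
    by (rule distributed_emeasure[OF D]) simp
  also have "\<dots> \<le> (\<integral>\<^sup>+x. ennreal (1 / (2 * s)) * indicator {-r<..<r} x \<partial>lborel)"
    by (intro nn_integral_mono) (auto split: split_indicator simp: nd_le[OF s] intro!: ennreal_leI)
  also have "\<dots> = ennreal (1 / (2 * s)) * ennreal (2 * r)"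
    using r by (simp add: nn_integral_cmult_indicator)
  also have "\<dots> = ennreal (r / s)" using r s by (simp add: ennreal_mult''[symmetric])
  finally have "emeasure P {\<omega>\<in>space P. \<bar>Y \<omega>\<bar> < r} \<le> ennreal (r / s)" unfolding eq .
  then show ?thesis using r s by (simp add: P.emeasure_eq_measure)
qed

lemma normal_tail_pt:
  assumes s: "0 < s" and a: "0 \<le> a" and x: "a < \<bar>x\<bar>"
  shows "normal_density 0 s x \<le> sqrt 2 * exp (- (a\<^sup>2 / (4 * s\<^sup>2))) * normal_density 0 (sqrt 2 * s) x"
proof -
  have sq: "sqrt (2 * pi * (sqrt 2 * s)\<^sup>2) = sqrt 2 * sqrt (2 * pi * s\<^sup>2)"
    by (simp add: power_mult_distrib real_sqrt_mult[symmetric] algebra_simps)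
  have pos: "0 < sqrt (2 * pi * s\<^sup>2)" using s by simp
  have "a\<^sup>2 \<le> x\<^sup>2" using a x by (metis abs_le_square_iff abs_of_nonneg less_imp_le)
  then have ex: "- x\<^sup>2 / (2 * s\<^sup>2) \<le> - (a\<^sup>2 / (4 * s\<^sup>2)) + - x\<^sup>2 / (2 * (sqrt 2 * s)\<^sup>2)"
    using s by (simp add: power_mult_distrib field_simps)
  have "normal_density 0 s x = 1 / sqrt (2 * pi * s\<^sup>2) * exp (- x\<^sup>2 / (2 * s\<^sup>2))"
    by (simp add: normal_density_def)
  also have "\<dots> \<le> 1 / sqrt (2 * pi * s\<^sup>2) * exp (- (a\<^sup>2 / (4 * s\<^sup>2)) + - x\<^sup>2 / (2 * (sqrt 2 * s)\<^sup>2))"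
    using ex pos by (intro mult_left_mono) auto
  also have "\<dots> = sqrt 2 * exp (- (a\<^sup>2 / (4 * s\<^sup>2))) * normal_density 0 (sqrt 2 * s) x"
    unfolding normal_density_def sq exp_add by (simp add: field_simps)
  finally show ?thesis .
qed

lemma normal_tail:
  assumes P: "prob_space P" and D: "distributed P lborel Y (normal_density 0 s)"
    and s: "0 < s" and a: "0 \<le> a"
  shows "measure P {\<omega>\<in>space P. a < \<bar>Y \<omega>\<bar>} \<le> sqrt 2 * exp (- (a\<^sup>2 / (4 * s\<^sup>2)))"
proof -
  interpret P: prob_space P by (rule P)
  let ?c = "sqrt 2 * exp (- (a\<^sup>2 / (4 * s\<^sup>2)))"
  have eq: "{\<omega>\<in>space P. a < \<bar>Y \<omega>\<bar>} = Y -` {x. a < \<bar>x\<bar>} \<inter> space P" by auto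
  have "emeasure P (Y -` {x. a < \<bar>x\<bar>} \<inter> space P) = (\<integral>\<^sup>+x. ennreal (normal_density 0 s x) * indicator {x. a < \<bar>x\<bar>} x \<partial>lborel)"
    by (rule distributed_emeasure[OF D]) simp
  also have "\<dots> \<le> (\<integral>\<^sup>+x. ennreal ?c * ennreal (normal_density 0 (sqrt 2 * s) x) \<partial>lborel)"
    by (intro nn_integral_mono)
       (auto split: split_indicator simp: ennreal_mult''[symmetric] intro!: ennreal_leI normal_tail_pt[OF s a])
  also have "\<dots> = ennreal ?c * (\<integral>\<^sup>+x. ennreal (normal_density 0 (sqrt 2 * s) x) \<partial>lborel)"
    by (rule nn_integral_cmult) simp
  also have "(\<integral>\<^sup>+x. ennreal (normal_density 0 (sqrt 2 * s) x) \<partial>lborel) = 1"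
  proof -
    have ps: "0 < sqrt 2 * s" using s by simp
    show ?thesis
      by (subst nn_integral_eq_integral) (auto simp: integrable_normal_density[OF ps] integral_normal_density[OF ps])
  qed
  finally have "emeasure P {\<omega>\<in>space P. a < \<bar>Y \<omega>\<bar>} \<le> ennreal ?c" unfolding eq by simp
  then show ?thesis by (simp add: P.emeasure_eq_measure)
qed

definition coef :: "(nat \<Rightarrow> complex) \<Rightarrow> (nat \<times> nat) \<times> bool \<Rightarrow> real" where
  "coef y t = (if snd t then Re (y (fst (fst t))) else Im (y (fst (fst t))))"

definition Tc :: "nat \<Rightarrow> nat \<Rightarrow> ((nat \<times> nat) \<times> bool) set" where
  "Tc M i = ({..<M}\<times>{i})\<times>UNIV"

lemma sum_Tc: "(\<Sum>t\<in>Tc M i. f t) = (\<Sum>j<M. f ((j,i),True) + f ((j,i),False))"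
proof -
  have "(\<Sum>t\<in>Tc M i. f t) = (\<Sum>p\<in>{..<M}\<times>{i}. \<Sum>b\<in>UNIV. f (p,b))"
    unfolding Tc_def by (subst sum.cartesian_product) (simp add: case_prod_beta')
  also have "\<dots> = (\<Sum>j<M. \<Sum>k\<in>{i}. \<Sum>b\<in>UNIV. f ((j,k),b))"
    by (subst sum.cartesian_product) (simp add: case_prod_beta')
  also have "\<dots> = (\<Sum>j<M. f ((j,i),True) + f ((j,i),False))"
    by (simp add: UNIV_bool add.commute)
  finally show ?thesis .
qed

lemma finite_Tc[simp]: "finite (Tc M i)" by (simp add: Tc_def)

lemma Re_cinner: "Re (cinner M y (\<lambda>j. \<omega> (j,i))) = (\<Sum>t\<in>Tc M i. coef y t * XX t \<omega>)"
  unfolding sum_Tc cinner_def coef_def XX_def by (simp add: Re_sum)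

lemma sumsq_coef: "(\<Sum>t\<in>Tc M i. (coef y t)\<^sup>2) = (\<Sum>j<M. (cmod (y j))\<^sup>2)"
  unfolding sum_Tc coef_def by (simp add: cmod_power2)

lemma Tc_sub: "i < N \<Longrightarrow> Tc M i \<subseteq> ({..<M}\<times>{..<N})\<times>UNIV"
  by (auto simp: Tc_def)

lemma col_distr:
  assumes M: "0 < M" and i: "i < N" and S2: "0 < (\<Sum>j<M. (cmod (y j))\<^sup>2)"
  shows "distributed (gauss_matrix M N) lborel (\<lambda>\<omega>. \<Sum>t\<in>Tc M i. coef y t * XX t \<omega>)
           (normal_density 0 (sqrt (1/real M/2) * sqrt (\<Sum>j<M. (cmod (y j))\<^sup>2)))"
proof -
  let ?P = "gauss_matrix M N" let ?\<sigma> = "sqrt (1/real M/2)"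
  interpret P: prob_space ?P by (rule gm_prob[OF M])
  have N: "0 < N" using i by simp
  have sp: "0 < ?\<sigma>" using M by simp
  define Z where "Z = {t\<in>Tc M i. coef y t \<noteq> 0}"
  have Zsub: "Z \<subseteq> Tc M i" by (auto simp: Z_def)
  have finZ: "finite Z" using Zsub by (rule finite_subset) simp
  have sumZ: "(\<Sum>t\<in>Tc M i. coef y t * XX t \<omega>) = (\<Sum>t\<in>Z. coef y t * XX t \<omega>)" for \<omega>
    by (rule sum.mono_neutral_right) (auto simp: Z_def)
  have sumZ2: "(\<Sum>t\<in>Tc M i. (coef y t)\<^sup>2) = (\<Sum>t\<in>Z. (coef y t)\<^sup>2)"
    by (rule sum.mono_neutral_right) (auto simp: Z_def)
  have Zne: "Z \<noteq> {}"
  proof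
    assume "Z = {}"
    then have "(\<Sum>t\<in>Tc M i. (coef y t)\<^sup>2) = 0" using sumZ2 by simp
    then show False using S2 sumsq_coef[where M=M and i=i and y=y] by simp
  qed
  have Zfst: "fst t \<in> {..<M}\<times>{..<N}" if "t \<in> Z" for t
    using that Zsub Tc_sub[where M=M, OF i] by auto
  have ind: "P.indep_vars (\<lambda>_. borel) (\<lambda>t \<omega>. coef y t * XX t \<omega>) Z"
    by (rule P.indep_vars_compose2[OF P.indep_vars_subset[OF XX_indep[OF M N]]])
       (use Zsub Tc_sub[where M=M, OF i] in auto)
  have dist: "distributed ?P lborel (\<lambda>\<omega>. coef y t * XX t \<omega>) (normal_density 0 (\<bar>coef y t\<bar> * ?\<sigma>))"
    if "t \<in> Z" for t
  proof -
    have c: "coef y t \<noteq> 0" using that by (simp add: Z_def)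
    show ?thesis using P.normal_density_affine[OF XX_distr[OF M Zfst[OF that]] sp c, of 0] by simp
  qed
  have "distributed ?P lborel (\<lambda>\<omega>. \<Sum>t\<in>Z. coef y t * XX t \<omega>)
        (normal_density (\<Sum>t\<in>Z. 0) (sqrt (\<Sum>t\<in>Z. (\<bar>coef y t\<bar> * ?\<sigma>)\<^sup>2)))"
    by (rule P.sum_indep_normal[OF finZ Zne ind]) (use dist sp in \<open>auto simp: Z_def\<close>)
  moreover have "sqrt (\<Sum>t\<in>Z. (\<bar>coef y t\<bar> * ?\<sigma>)\<^sup>2) = ?\<sigma> * sqrt (\<Sum>j<M. (cmod (y j))\<^sup>2)"
  proof -
    have "(\<Sum>t\<in>Z. (\<bar>coef y t\<bar> * ?\<sigma>)\<^sup>2) = ?\<sigma>\<^sup>2 * (\<Sum>t\<in>Z. (coef y t)\<^sup>2)"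
      by (simp add: power_mult_distrib sum_distrib_left mult.commute)
    also have "\<dots> = ?\<sigma>\<^sup>2 * (\<Sum>j<M. (cmod (y j))\<^sup>2)" using sumZ2 sumsq_coef[where M=M and i=i and y=y] by simp
    finally show ?thesis using sp by (simp only: real_sqrt_mult real_sqrt_abs abs_of_pos)
  qed
  ultimately show ?thesis by (simp add: sumZ)
qed

lemma col_indep:
  assumes M: "0 < M" and N: "0 < N"
  shows "prob_space.indep_vars (gauss_matrix M N) (\<lambda>_. borel)
           (\<lambda>i \<omega>. \<Sum>t\<in>Tc M i. coef y t * XX t \<omega>) {..<N}"
proof -
  let ?P = "gauss_matrix M N"
  interpret P: prob_space ?P by (rule gm_prob[OF M])
  have R: "P.indep_vars (\<lambda>i. PiM (Tc M i) (\<lambda>_. borel)) (\<lambda>i \<omega>. restrict (\<lambda>t. XX t \<omega>) (Tc M i)) {..<N}"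
    by (rule P.indep_vars_restrict[OF XX_indep[OF M N]])
       (auto simp: Tc_def disjoint_family_on_def)
  have g: "(\<lambda>z. \<Sum>t\<in>Tc M i. coef y t * z t) \<in> borel_measurable (PiM (Tc M i) (\<lambda>_. borel))" for i
    by (intro borel_measurable_sum borel_measurable_times borel_measurable_const measurable_component_singleton) auto
  have "P.indep_vars (\<lambda>_. borel) (\<lambda>i \<omega>. (\<lambda>z. \<Sum>t\<in>Tc M i. coef y t * z t) (restrict (\<lambda>t. XX t \<omega>) (Tc M i))) {..<N}"
    by (rule P.indep_vars_compose2[OF R g])
  moreover have "(\<lambda>i \<omega>. (\<lambda>z. \<Sum>t\<in>Tc M i. coef y t * z t) (restrict (\<lambda>t. XX t \<omega>) (Tc M i)))
      = (\<lambda>i \<omega>. \<Sum>t\<in>Tc M i. coef y t * XX t \<omega>)"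
    by (intro ext sum.cong) auto
  ultimately show ?thesis by simp
qed

lemma count_bound:
  assumes P: "prob_space P" and A: "\<And>i. i < N \<Longrightarrow> A i \<in> sets P" and m: "0 < m" and p: "0 \<le> p"
    and prod: "\<And>S. S \<subseteq> {..<N} \<Longrightarrow> card S = m \<Longrightarrow> measure P (\<Inter>i\<in>S. A i) \<le> p ^ m"
  shows "measure P {\<omega>\<in>space P. m \<le> card {i\<in>{..<N}. \<omega> \<in> A i}} \<le> 2 ^ N * p ^ m"
proof -
  interpret P: prob_space P by (rule P)
  define F where "F = {S. S \<subseteq> {..<N} \<and> card S = m}"
  have finF: "finite F" unfolding F_def by (rule finite_subset[of _ "Pow {..<N}"]) auto
  have Fne: "S \<noteq> {}" if "S \<in> F" for S using that m by (auto simp: F_def)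
  have Fs: "(\<Inter>i\<in>S. A i) \<in> sets P" if "S \<in> F" for S
  proof -
    have "finite S" using that by (auto simp: F_def intro: finite_subset)
    then show ?thesis using Fne[OF that] that A by (intro sets.finite_INT) (auto simp: F_def)
  qed
  have sub: "{\<omega>\<in>space P. m \<le> card {i\<in>{..<N}. \<omega> \<in> A i}} \<subseteq> (\<Union>S\<in>F. \<Inter>i\<in>S. A i)"
  proof
    fix \<omega> assume w: "\<omega> \<in> {\<omega>\<in>space P. m \<le> card {i\<in>{..<N}. \<omega> \<in> A i}}"
    then obtain S where S: "S \<subseteq> {i\<in>{..<N}. \<omega> \<in> A i}" "card S = m"
      using obtain_subset_with_card_n[of m "{i\<in>{..<N}. \<omega> \<in> A i}"] by auto
    then have "S \<in> F" by (auto simp: F_def)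
    moreover have "\<omega> \<in> (\<Inter>i\<in>S. A i)" using S by auto
    ultimately show "\<omega> \<in> (\<Union>S\<in>F. \<Inter>i\<in>S. A i)" by auto
  qed
  have "measure P {\<omega>\<in>space P. m \<le> card {i\<in>{..<N}. \<omega> \<in> A i}} \<le> measure P (\<Union>S\<in>F. \<Inter>i\<in>S. A i)"
    by (rule P.finite_measure_mono[OF sub]) (use finF Fs in auto)
  also have "\<dots> \<le> (\<Sum>S\<in>F. measure P (\<Inter>i\<in>S. A i))"
    by (rule P.finite_measure_subadditive_finite) (use finF Fs in auto)
  also have "\<dots> \<le> (\<Sum>S\<in>F. p ^ m)"
    by (intro sum_mono prod) (auto simp: F_def)
  also have "\<dots> = real (card F) * p ^ m" by simp
  also have "\<dots> \<le> 2 ^ N * p ^ m"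
  proof -
    have "card F \<le> card (Pow {..<N})" by (rule card_mono) (auto simp: F_def)
    then have "real (card F) \<le> 2 ^ N" by (simp add: card_Pow)
    then show ?thesis using p by (intro mult_right_mono) auto
  qed
  finally show ?thesis .
qed

definition FF :: "nat \<Rightarrow> (nat \<Rightarrow> complex) \<Rightarrow> nat \<Rightarrow> (nat \<times> nat \<Rightarrow> complex) \<Rightarrow> real" where
  "FF M y i \<omega> = (\<Sum>t\<in>Tc M i. coef y t * XX t \<omega>)"

lemma FF_meas[measurable]: "i < N \<Longrightarrow> FF M y i \<in> borel_measurable (gauss_matrix M N)"
  unfolding FF_def
  by (intro borel_measurable_sum borel_measurable_times borel_measurable_const XX_meas)
     (auto simp: Tc_def)

lemma By_bound:
  assumes M: "0 < M" and N: "0 < N" and S2: "0 < (\<Sum>j<M. (cmod (y j))\<^sup>2)" and r: "0 \<le> r" and m: "0 < m"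
  shows "measure (gauss_matrix M N) {\<omega>\<in>space (gauss_matrix M N). m \<le> card {i\<in>{..<N}. \<bar>FF M y i \<omega>\<bar> < r}}
     \<le> 2 ^ N * (r / (sqrt (1/real M/2) * sqrt (\<Sum>j<M. (cmod (y j))\<^sup>2))) ^ m"
proof -
  let ?P = "gauss_matrix M N" let ?s = "sqrt (1/real M/2) * sqrt (\<Sum>j<M. (cmod (y j))\<^sup>2)"
  interpret P: prob_space ?P by (rule gm_prob[OF M])
  have sp: "0 < ?s" using M S2 by simp
  define A where "A i = {\<omega>\<in>space ?P. \<bar>FF M y i \<omega>\<bar> < r}" for i
  have A: "A i \<in> sets ?P" if "i < N" for i unfolding A_def using that by measurable
  have single: "P.prob (A i) \<le> r / ?s" if "i < N" for i
    unfolding A_def using normal_small_ball[OF gm_prob[OF M] col_distr[OF M that S2] sp r]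
    by (simp add: FF_def)
  have ind: "P.indep_vars (\<lambda>_. borel) (FF M y) {..<N}"
    using col_indep[OF M N, of y] by (simp add: FF_def[abs_def])
  have "P.prob {\<omega>\<in>space ?P. m \<le> card {i\<in>{..<N}. \<omega> \<in> A i}} \<le> 2 ^ N * (r / ?s) ^ m"
  proof (rule count_bound[OF gm_prob[OF M] A m])
    show "0 \<le> r / ?s" using r sp by simp
  next
    fix S assume S: "S \<subseteq> {..<N}" "card S = m"
    have Sne: "S \<noteq> {}" using S m by auto
    have finS: "finite S" using S(1) finite_subset by blast
    have "(\<Inter>i\<in>S. A i) = (\<Inter>i\<in>S. FF M y i -` {-r<..<r} \<inter> space ?P)"
      unfolding A_def by (auto simp: abs_less_iff) (metis minus_less_iff)
    also have "P.prob \<dots> = (\<Prod>i\<in>S. P.prob (FF M y i -` {-r<..<r} \<inter> space ?P))"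
      by (rule P.indep_varsD[OF ind Sne finS S(1)]) simp
    also have "\<dots> \<le> (\<Prod>i\<in>S. r / ?s)"
    proof (rule prod_mono)
      fix i assume i: "i \<in> S"
      have "FF M y i -` {-r<..<r} \<inter> space ?P = A i" unfolding A_def by (auto simp: abs_less_iff)
      then show "0 \<le> P.prob (FF M y i -` {-r<..<r} \<inter> space ?P) \<and> P.prob (FF M y i -` {-r<..<r} \<inter> space ?P) \<le> r / ?s"
        using single[of i] i S by auto
    qed
    also have "\<dots> = (r / ?s) ^ m" using S by simp
    finally show "P.prob (\<Inter>i\<in>S. A i) \<le> (r / ?s) ^ m" .
  qed (use A in auto)
  moreover have "{\<omega>\<in>space ?P. m \<le> card {i\<in>{..<N}. \<omega> \<in> A i}} = {\<omega>\<in>space ?P. m \<le> card {i\<in>{..<N}. \<bar>FF M y i \<omega>\<bar> < r}}"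
    unfolding A_def by auto
  ultimately show ?thesis by simp
qed

lemma E1_bound:
  assumes M: "0 < M"
  shows "measure (gauss_matrix M N) {\<omega>\<in>space (gauss_matrix M N). \<exists>t\<in>({..<M}\<times>{..<N})\<times>UNIV. 1 < \<bar>XX t \<omega>\<bar>}
     \<le> 2 * real M * real N * (sqrt 2 * exp (- (real M / 2)))"
proof -
  let ?P = "gauss_matrix M N" let ?T = "({..<M}\<times>{..<N})\<times>(UNIV::bool set)"
  interpret P: prob_space ?P by (rule gm_prob[OF M])
  have sp: "0 < sqrt (1/real M/2)" using M by simp
  have each: "P.prob {\<omega>\<in>space ?P. 1 < \<bar>XX t \<omega>\<bar>} \<le> sqrt 2 * exp (- (real M / 2))" if "t \<in> ?T" for t
  proof -
    have "fst t \<in> {..<M}\<times>{..<N}" using that by auto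
    from normal_tail[OF gm_prob[OF M] XX_distr[OF M this] sp, of 1]
    show ?thesis using M by (simp add: power_divide)
  qed
  have "{\<omega>\<in>space ?P. \<exists>t\<in>?T. 1 < \<bar>XX t \<omega>\<bar>} = (\<Union>t\<in>?T. {\<omega>\<in>space ?P. 1 < \<bar>XX t \<omega>\<bar>})" by auto
  also have "P.prob \<dots> \<le> (\<Sum>t\<in>?T. P.prob {\<omega>\<in>space ?P. 1 < \<bar>XX t \<omega>\<bar>})"
    by (rule P.finite_measure_subadditive_finite) auto
  also have "\<dots> \<le> (\<Sum>t\<in>?T. sqrt 2 * exp (- (real M / 2)))"
    by (rule sum_mono) (rule each)
  also have "\<dots> = 2 * real M * real N * (sqrt 2 * exp (- (real M / 2)))"
    by (simp add: card_cartesian_product)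
  finally show ?thesis .
qed

definition val :: "nat \<Rightarrow> (nat \<Rightarrow> complex) \<Rightarrow> (nat \<times> nat \<Rightarrow> complex) \<Rightarrow> nat \<Rightarrow> real" where
  "val M x \<omega> i = (cmod (cinner M x (\<lambda>j. \<omega> (j, i))))\<^sup>2"

definition nsq :: "nat \<Rightarrow> (nat \<Rightarrow> complex) \<Rightarrow> real" where
  "nsq M x = (\<Sum>j<M. (cmod (x j))\<^sup>2)"

lemma PU_iff:
  assumes M: "0 < M" and N: "0 < N" and a0: "0 < \<alpha>" and a1: "\<alpha> \<le> 1"
  shows "c \<le> PU M N \<omega> \<alpha> \<longleftrightarrow>
     (\<forall>x\<in>unit_vecs M. \<alpha> * real N \<le> real (card {i\<in>{..<N}. c \<le> val M x \<omega> i}))"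
proof -
  define F where "F = {I. I \<subseteq> {..<N} \<and> real (card I) \<ge> \<alpha> * real N}"
  define h where "h x I = Min ((\<lambda>i. val M x \<omega> i) ` I)" for x I
  define g where "g x = Sup (h x ` F)" for x
  have PU: "PU M N \<omega> \<alpha> = Inf (g ` unit_vecs M)"
    unfolding PU_def g_def h_def F_def val_def by simp
  have finF: "finite F" unfolding F_def by (rule finite_subset[of _ "Pow {..<N}"]) auto
  have allF: "{..<N} \<in> F" using a1 N by (auto simp: F_def)
  have Fne: "I \<noteq> {}" "finite I" if "I \<in> F" for I
  proof -
    show "finite I" using that by (auto simp: F_def intro: finite_subset)
    have "0 < \<alpha> * real N" using a0 N by simp
    then show "I \<noteq> {}" using that by (auto simp: F_def)
  qed
  have gmax: "g x = Max (h x ` F)" for x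
    unfolding g_def using finF allF by (intro cSup_eq_Max) auto
  have key: "c \<le> g x \<longleftrightarrow> \<alpha> * real N \<le> real (card {i\<in>{..<N}. c \<le> val M x \<omega> i})" for x
  proof
    assume "c \<le> g x"
    then have "\<exists>I\<in>F. c \<le> h x I"
      unfolding gmax using finF allF by (subst (asm) Max_ge_iff) auto
    then obtain I where I: "I \<in> F" "c \<le> h x I" by blast
    then have "\<forall>i\<in>I. c \<le> val M x \<omega> i" unfolding h_def using Fne[OF I(1)] by (simp add: Min_ge_iff)
    then have "I \<subseteq> {i\<in>{..<N}. c \<le> val M x \<omega> i}" using I(1) by (auto simp: F_def)
    then have "card I \<le> card {i\<in>{..<N}. c \<le> val M x \<omega> i}" by (intro card_mono) auto
    then show "\<alpha> * real N \<le> real (card {i\<in>{..<N}. c \<le> val M x \<omega> i})"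
      using I(1) unfolding F_def by simp
  next
    assume a: "\<alpha> * real N \<le> real (card {i\<in>{..<N}. c \<le> val M x \<omega> i})"
    let ?L = "{i\<in>{..<N}. c \<le> val M x \<omega> i}"
    have L: "?L \<in> F" using a by (auto simp: F_def)
    have "c \<le> h x ?L" unfolding h_def using Fne[OF L] by (simp add: Min_ge_iff)
    also have "h x ?L \<le> g x" unfolding gmax using finF L by simp
    finally show "c \<le> g x" .
  qed
  have g0: "0 \<le> g x" for x
  proof -
    have "0 \<le> h x {..<N}" unfolding h_def using N by (subst Min_ge_iff) (auto simp: val_def)
    also have "\<dots> \<le> g x" unfolding gmax using finF allF by simp
    finally show ?thesis .
  qed
  have Une: "unit_vecs M \<noteq> {}"
  proof -
    have e: "(\<Sum>j<M. (cmod (if j = 0 then 1 else (0::complex)))\<^sup>2) = (\<Sum>j<M. if j = 0 then 1 else 0)"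
      by (rule sum.cong) auto
    have "(\<lambda>j. if j = 0 then 1 else (0::complex)) \<in> unit_vecs M"
      unfolding unit_vecs_def using e M by simp
    then show ?thesis by auto
  qed
  have "c \<le> Inf (g ` unit_vecs M) \<longleftrightarrow> (\<forall>x\<in>unit_vecs M. c \<le> g x)"
  proof
    assume "c \<le> Inf (g ` unit_vecs M)"
    moreover have "Inf (g ` unit_vecs M) \<le> g x" if "x \<in> unit_vecs M" for x
      by (rule cInf_lower) (use that g0 in \<open>auto intro!: bdd_belowI[of _ 0]\<close>)
    ultimately show "\<forall>x\<in>unit_vecs M. c \<le> g x" by (meson order_trans)
  next
    assume "\<forall>x\<in>unit_vecs M. c \<le> g x"
    then show "c \<le> Inf (g ` unit_vecs M)" using Une by (intro cInf_greatest) auto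
  qed
  then show ?thesis unfolding PU using key by simp
qed

lemma cinner_scale: "cinner M (\<lambda>j. x j / complex_of_real t) y = cinner M x y / complex_of_real t"
  unfolding cinner_def by (simp add: sum_divide_distrib)

lemma val_scale:
  assumes "0 < t" shows "val M (\<lambda>j. x j / complex_of_real t) \<omega> i = val M x \<omega> i / t\<^sup>2"
  unfolding val_def cinner_scale using assms by (simp add: norm_divide power_divide)

lemma nsq_scale:
  assumes "0 < t" shows "nsq M (\<lambda>j. x j / complex_of_real t) = nsq M x / t\<^sup>2"
  unfolding nsq_def using assms by (simp add: norm_divide power_divide sum_divide_distrib)

definition QC :: "complex set" where "QC = {Complex a b |a b. a \<in> \<rat> \<and> b \<in> \<rat>}"

lemma countable_QC: "countable QC"
proof -
  have "QC = (\<lambda>(a, b). Complex a b) ` (\<rat> \<times> \<rat>)" by (auto simp: QC_def)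
  then show ?thesis using countable_rat by (metis countable_SIGMA countable_image)
qed

lemma QC_dense:
  assumes "0 < d" shows "\<exists>z\<in>QC. cmod (z - w) < d"
proof -
  obtain a where a: "a \<in> \<rat>" "Re w - d/2 < a" "a < Re w + d/2"
    using Rats_dense_in_real[of "Re w - d/2" "Re w + d/2"] assms by auto
  obtain b where b: "b \<in> \<rat>" "Im w - d/2 < b" "b < Im w + d/2"
    using Rats_dense_in_real[of "Im w - d/2" "Im w + d/2"] assms by auto
  have "cmod (Complex a b - w) \<le> \<bar>Re (Complex a b - w)\<bar> + \<bar>Im (Complex a b - w)\<bar>" by (rule cmod_le)
  also have "\<dots> < d" using a b by (simp add: abs_less_iff)
  finally show ?thesis using a b by (auto simp: QC_def)
qed

definition Dq :: "nat \<Rightarrow> (nat \<Rightarrow> complex) set" where "Dq M = PiE {..<M} (\<lambda>_. QC)"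

lemma countable_Dq: "countable (Dq M)"
  unfolding Dq_def by (rule countable_PiE) (auto simp: countable_QC)

lemma Dq_dense:
  assumes "0 < d" shows "\<exists>q\<in>Dq M. \<forall>j<M. cmod (q j - x j) < d"
proof -
  have "\<forall>j. \<exists>z\<in>QC. cmod (z - x j) < d" using QC_dense[OF assms] by auto
  then obtain f where f: "\<And>j. f j \<in> QC \<and> cmod (f j - x j) < d" by metis
  show ?thesis
    by (rule bexI[of _ "restrict f {..<M}"]) (use f in \<open>auto simp: Dq_def\<close>)
qed

lemma cinner_diff: "cinner M x z - cinner M y z = cinner M (\<lambda>j. x j - y j) z"
  unfolding cinner_def by (simp add: sum_subtractf algebra_simps)

lemma cinner_bound: "cmod (cinner M x z) \<le> (\<Sum>j<M. cmod (x j) * cmod (z j))"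
  unfolding cinner_def
  by (rule order_trans[OF norm_sum]) (simp add: norm_mult)

lemma sq_diff: assumes "0 \<le> a" "0 \<le> b" shows "\<bar>a\<^sup>2 - b\<^sup>2\<bar> = \<bar>a - b\<bar> * ((a::real) + b)"
proof -
  have "a\<^sup>2 - b\<^sup>2 = (a - b) * (a + b)" by (simp add: power2_eq_square algebra_simps)
  then show ?thesis using assms by (simp add: abs_mult)
qed

lemma val_cont:
  assumes x1: "\<And>j. j < M \<Longrightarrow> cmod (x j) \<le> 1" and e: "0 < e"
  shows "\<exists>d>0. \<forall>q. (\<forall>j<M. cmod (q j - x j) < d) \<longrightarrow>
           (\<forall>i<N. \<bar>val M q \<omega> i - val M x \<omega> i\<bar> < e) \<and> \<bar>nsq M q - nsq M x\<bar> < e"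
proof -
  define B where "B = 1 + (\<Sum>i<N. \<Sum>j<M. cmod (\<omega> (j, i)))"
  have B1: "1 \<le> B" unfolding B_def by (simp add: sum_nonneg)
  have colB: "(\<Sum>j<M. cmod (\<omega> (j, i))) \<le> B" if "i < N" for i
  proof -
    have "(\<Sum>j<M. cmod (\<omega> (j, i))) \<le> (\<Sum>i<N. \<Sum>j<M. cmod (\<omega> (j, i)))"
      by (rule member_le_sum[of i "{..<N}" "\<lambda>i. \<Sum>j<M. cmod (\<omega> (j, i))"]) (use that in \<open>auto intro: sum_nonneg\<close>)
    then show ?thesis unfolding B_def by simp
  qed
  define k where "k = 6 * (B\<^sup>2 + real M + 1)"
  have kpos: "0 < k" unfolding k_def by (smt (verit) of_nat_0_le_iff zero_le_power2)
  define d where "d = min 1 (e / k)"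
  have dpos: "0 < d" using e kpos by (simp add: d_def)
  have dk: "d * k \<le> e" using kpos by (simp add: d_def pos_le_divide_eq[symmetric])
  have d1: "d \<le> 1" by (simp add: d_def)
  have dB: "3 * d * B\<^sup>2 < e"
  proof -
    have "d * (6 * (B\<^sup>2 + real M + 1)) \<le> e" using dk by (simp add: k_def)
    moreover have "3 * d * B\<^sup>2 < d * (6 * (B\<^sup>2 + real M + 1))"
    proof -
      have "0 < d * (3 * B\<^sup>2 + 6 * real M + 6)" using dpos by (intro mult_pos_pos) (simp, smt (verit) of_nat_0_le_iff zero_le_power2)
      then show ?thesis by (simp add: algebra_simps)
    qed
    ultimately show ?thesis by linarith
  qed
  have dM: "3 * d * real M < e"
  proof -
    have "d * (6 * (B\<^sup>2 + real M + 1)) \<le> e" using dk by (simp add: k_def)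
    moreover have "3 * d * real M < d * (6 * (B\<^sup>2 + real M + 1))"
    proof -
      have "0 < d * (6 * B\<^sup>2 + 3 * real M + 6)" using dpos by (intro mult_pos_pos) (simp, smt (verit) of_nat_0_le_iff zero_le_power2)
      then show ?thesis by (simp add: algebra_simps)
    qed
    ultimately show ?thesis by linarith
  qed
  show ?thesis
  proof (rule exI[of _ d], rule conjI[OF dpos], rule allI, rule impI)
    fix q assume q: "\<forall>j<M. cmod (q j - x j) < d"
    have V: "\<forall>i<N. \<bar>val M q \<omega> i - val M x \<omega> i\<bar> < e"
    proof (intro allI impI)
      fix i assume i: "i < N"
      let ?z = "\<lambda>j. \<omega> (j, i)"
      let ?a = "cmod (cinner M q ?z)" and ?b = "cmod (cinner M x ?z)"
      have diff: "cmod (cinner M q ?z - cinner M x ?z) \<le> d * B"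
      proof -
        have "cmod (cinner M q ?z - cinner M x ?z) \<le> (\<Sum>j<M. cmod (q j - x j) * cmod (?z j))"
          unfolding cinner_diff by (rule cinner_bound)
        also have "\<dots> \<le> (\<Sum>j<M. d * cmod (?z j))"
          using q by (intro sum_mono mult_right_mono) auto
        also have "\<dots> \<le> d * B" using colB[OF i] dpos by (simp add: sum_distrib_left[symmetric])
        finally show ?thesis .
      qed
      have bB: "?b \<le> B"
      proof -
        have "?b \<le> (\<Sum>j<M. cmod (x j) * cmod (?z j))" by (rule cinner_bound)
        also have "\<dots> \<le> (\<Sum>j<M. 1 * cmod (?z j))" using x1 by (intro sum_mono mult_right_mono) auto
        also have "\<dots> \<le> B" using colB[OF i] by simp
        finally show ?thesis .
      qed
      have ab: "\<bar>?a - ?b\<bar> \<le> d * B"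
        using diff norm_triangle_ineq3[of "cinner M q ?z" "cinner M x ?z"] by simp
      have "\<bar>?a\<^sup>2 - ?b\<^sup>2\<bar> = \<bar>?a - ?b\<bar> * (?a + ?b)"
        by (rule sq_diff) auto
      also have "\<dots> \<le> (d * B) * (3 * B)"
      proof (rule mult_mono[OF ab])
        have "d * B \<le> 1 * B" using d1 B1 by (intro mult_right_mono) auto
        moreover have "?a - ?b \<le> \<bar>?a - ?b\<bar>" by (rule abs_ge_self)
        ultimately show "?a + ?b \<le> 3 * B" using ab bB by linarith
      qed (use dpos B1 in auto)
      also have "\<dots> = 3 * d * B\<^sup>2" by (simp add: power2_eq_square)
      finally show "\<bar>val M q \<omega> i - val M x \<omega> i\<bar> < e" unfolding val_def using dB by linarith
    qed
    have "\<bar>nsq M q - nsq M x\<bar> \<le> (\<Sum>j<M. \<bar>(cmod (q j))\<^sup>2 - (cmod (x j))\<^sup>2\<bar>)"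
      unfolding nsq_def by (simp add: sum_subtractf[symmetric] sum_abs)
    also have "\<dots> \<le> (\<Sum>j<M. 3 * d)"
    proof (rule sum_mono)
      fix j assume j: "j \<in> {..<M}"
      let ?a = "cmod (q j)" and ?b = "cmod (x j)"
      have "\<bar>?a - ?b\<bar> \<le> cmod (q j - x j)" by (rule norm_triangle_ineq3)
      moreover have "cmod (q j - x j) < d" using q j by simp
      ultimately have ab: "\<bar>?a - ?b\<bar> \<le> d" by linarith
      have "\<bar>?a\<^sup>2 - ?b\<^sup>2\<bar> = \<bar>?a - ?b\<bar> * (?a + ?b)"
        by (rule sq_diff) auto
      also have "\<dots> \<le> d * 3"
      proof (rule mult_mono[OF ab])
        have "?a - ?b \<le> \<bar>?a - ?b\<bar>" by (rule abs_ge_self)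
        moreover have "?b \<le> 1" using x1[of j] j by simp
        ultimately show "?a + ?b \<le> 3" using ab d1 by linarith
      qed (use dpos in auto)
      finally show "\<bar>?a\<^sup>2 - ?b\<^sup>2\<bar> \<le> 3 * d" by simp
    qed
    also have "\<dots> = 3 * d * real M" by simp
    finally have "\<bar>nsq M q - nsq M x\<bar> < e" using dM by linarith
    then show "(\<forall>i<N. \<bar>val M q \<omega> i - val M x \<omega> i\<bar> < e) \<and> \<bar>nsq M q - nsq M x\<bar> < e" using V by blast
  qed
qed

lemma unit_le1: "x \<in> unit_vecs M \<Longrightarrow> j < M \<Longrightarrow> cmod (x j) \<le> 1"
proof -
  assume x: "x \<in> unit_vecs M" and j: "j < M"
  have "(cmod (x j))\<^sup>2 \<le> (\<Sum>j<M. (cmod (x j))\<^sup>2)"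
    by (rule member_le_sum) (use j in auto)
  then have "(cmod (x j))\<^sup>2 \<le> 1" using x by (simp add: unit_vecs_def)
  then show ?thesis by (simp add: power_le_one_iff abs_square_le_1)
qed

definition goodq :: "nat \<Rightarrow> nat \<Rightarrow> real \<Rightarrow> real \<Rightarrow> (nat \<Rightarrow> complex) \<Rightarrow> (nat \<times> nat \<Rightarrow> complex) \<Rightarrow> bool" where
  "goodq M N c \<alpha> q \<omega> \<longleftrightarrow> \<alpha> * real N \<le> real (card {i\<in>{..<N}. c * nsq M q \<le> val M q \<omega> i})"

lemma good_iff_dense:
  assumes M: "0 < M" and a1: "\<alpha> \<le> 1"
  shows "(\<forall>x\<in>unit_vecs M. \<alpha> * real N \<le> real (card {i\<in>{..<N}. c \<le> val M x \<omega> i}))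
     \<longleftrightarrow> (\<forall>q\<in>Dq M. goodq M N c \<alpha> q \<omega>)"
proof
  assume H: "\<forall>x\<in>unit_vecs M. \<alpha> * real N \<le> real (card {i\<in>{..<N}. c \<le> val M x \<omega> i})"
  show "\<forall>q\<in>Dq M. goodq M N c \<alpha> q \<omega>"
  proof
    fix q assume q: "q \<in> Dq M"
    show "goodq M N c \<alpha> q \<omega>"
    proof (cases "nsq M q = 0")
      case True
      have "{i\<in>{..<N}. c * nsq M q \<le> val M q \<omega> i} = {..<N}" using True by (auto simp: val_def)
      moreover have "\<alpha> * real N \<le> 1 * real N" by (rule mult_right_mono[OF a1]) simp
      ultimately show ?thesis by (simp add: goodq_def True)
    next
      case False
      have np: "0 < nsq M q" using False unfolding nsq_def by (simp add: sum_nonneg order_less_le)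
      define t where "t = sqrt (nsq M q)"
      have tp: "0 < t" using np by (simp add: t_def)
      have t2: "t\<^sup>2 = nsq M q" using np by (simp add: t_def)
      let ?x = "\<lambda>j. q j / complex_of_real t"
      have "?x \<in> unit_vecs M" using nsq_scale[OF tp, of M q] t2 np by (simp add: unit_vecs_def nsq_def)
      then have "\<alpha> * real N \<le> real (card {i\<in>{..<N}. c \<le> val M ?x \<omega> i})" using H by blast
      moreover have "{i\<in>{..<N}. c \<le> val M ?x \<omega> i} = {i\<in>{..<N}. c * nsq M q \<le> val M q \<omega> i}"
        using val_scale[OF tp] t2 np by (auto simp: pos_le_divide_eq)
      ultimately show ?thesis by (simp add: goodq_def)
    qed
  qed
next
  assume H: "\<forall>q\<in>Dq M. goodq M N c \<alpha> q \<omega>"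
  show "\<forall>x\<in>unit_vecs M. \<alpha> * real N \<le> real (card {i\<in>{..<N}. c \<le> val M x \<omega> i})"
  proof (rule ccontr)
    assume "\<not> ?thesis"
    then obtain x where x: "x \<in> unit_vecs M" and bad: "real (card {i\<in>{..<N}. c \<le> val M x \<omega> i}) < \<alpha> * real N"
      by (auto simp: not_le)
    let ?L = "{i\<in>{..<N}. c \<le> val M x \<omega> i}" let ?S = "{i\<in>{..<N}. val M x \<omega> i < c}"
    have Sne: "?S \<noteq> {}"
    proof
      assume "?S = {}"
      then have "?L = {..<N}" by auto
      moreover have "\<alpha> * real N \<le> 1 * real N" by (rule mult_right_mono[OF a1]) simp
      ultimately show False using bad by simp
    qed
    define e where "e = Min ((\<lambda>i. c - val M x \<omega> i) ` ?S) / 2"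
    have "0 < Min ((\<lambda>i. c - val M x \<omega> i) ` ?S)" using Sne by (subst Min_gr_iff) auto
    then have epos: "0 < e" unfolding e_def by simp
    have eS: "2 * e \<le> c - val M x \<omega> i" if "i \<in> ?S" for i
      unfolding e_def using that by (simp add: Min_le)
    have nx: "nsq M x = 1" using x by (simp add: unit_vecs_def nsq_def)
    have c0: "0 < c"
    proof -
      obtain i where "i \<in> ?S" using Sne by blast
      then show ?thesis by (auto simp: val_def) (smt (verit) zero_le_power2)
    qed
    define e' where "e' = min e (e / c)"
    have e'pos: "0 < e'" using epos c0 by (simp add: e'_def)
    obtain d where d: "d > 0" and dprop: "\<And>q. (\<forall>j<M. cmod (q j - x j) < d) \<Longrightarrow>
           (\<forall>i<N. \<bar>val M q \<omega> i - val M x \<omega> i\<bar> < e') \<and> \<bar>nsq M q - nsq M x\<bar> < e'"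
      using val_cont[where M=M and x=x and N=N and \<omega>=\<omega>, OF unit_le1[OF x] e'pos] by blast
    obtain q where q: "q \<in> Dq M" "\<forall>j<M. cmod (q j - x j) < d" using Dq_dense[OF d] by blast
    note qq = dprop[OF q(2)]
    have sub: "{i\<in>{..<N}. c * nsq M q \<le> val M q \<omega> i} \<subseteq> ?L"
    proof
      fix i assume i: "i \<in> {i\<in>{..<N}. c * nsq M q \<le> val M q \<omega> i}"
      show "i \<in> ?L"
      proof (rule ccontr)
        assume "i \<notin> ?L"
        then have iS: "i \<in> ?S" using i by auto
        have v: "val M q \<omega> i < val M x \<omega> i + e" using qq i by (auto simp: e'_def)
        have "\<bar>nsq M q - 1\<bar> < e / c" using qq nx by (simp add: e'_def)
        then have ce: "c * \<bar>nsq M q - 1\<bar> < e" using c0 by (simp add: pos_less_divide_eq mult.commute)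
        have "c * (- \<bar>nsq M q - 1\<bar>) \<le> c * (nsq M q - 1)" using c0 by (intro mult_left_mono) auto
        moreover have "c * nsq M q = c + c * (nsq M q - 1)" by (simp add: algebra_simps)
        ultimately have "c - e < c * nsq M q" using ce by simp
        then show False using i v eS[OF iS] epos by auto
      qed
    qed
    have "card {i\<in>{..<N}. c * nsq M q \<le> val M q \<omega> i} \<le> card ?L" by (rule card_mono[OF _ sub]) simp
    then have "real (card {i\<in>{..<N}. c * nsq M q \<le> val M q \<omega> i}) < \<alpha> * real N" using bad by linarith
    then show False using H q(1) by (auto simp: goodq_def)
  qed
qed

lemma cinner_meas[measurable]:
  assumes i: "i < N" shows "(\<lambda>\<omega>. cinner M q (\<lambda>j. \<omega> (j, i))) \<in> borel_measurable (gauss_matrix M N)"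
  unfolding cinner_def
proof (rule borel_measurable_sum)
  fix j assume j: "j \<in> {..<M}"
  have c: "(\<lambda>\<omega>. \<omega> (j, i)) \<in> borel_measurable (gauss_matrix M N)"
    by (rule comp_meas) (use i j in auto)
  have cn: "cnj \<in> borel_measurable borel"
    by (rule borel_measurable_continuous_onI) (intro continuous_intros)
  have "(\<lambda>\<omega>. cnj (\<omega> (j, i))) \<in> borel_measurable (gauss_matrix M N)"
    using measurable_compose[OF c cn] by (simp add: o_def)
  then show "(\<lambda>\<omega>. q j * cnj (\<omega> (j, i))) \<in> borel_measurable (gauss_matrix M N)"
    by (intro borel_measurable_times borel_measurable_const)
qed

lemma val_meas[measurable]:
  assumes i: "i < N" shows "(\<lambda>\<omega>. val M q \<omega> i) \<in> borel_measurable (gauss_matrix M N)"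
  unfolding val_def using cinner_meas[OF i, of M q] by measurable

lemma goodq_sets:
  "{\<omega>\<in>space (gauss_matrix M N). goodq M N c \<alpha> q \<omega>} \<in> sets (gauss_matrix M N)"
proof -
  let ?P = "gauss_matrix M N"
  define F where "F = {S. S \<subseteq> {..<N} \<and> \<alpha> * real N \<le> real (card S)}"
  have finF: "finite F" unfolding F_def by (rule finite_subset[of _ "Pow {..<N}"]) auto
  have eq: "{\<omega>\<in>space ?P. goodq M N c \<alpha> q \<omega>} = (\<Union>S\<in>F. {\<omega>\<in>space ?P. \<forall>i\<in>S. c * nsq M q \<le> val M q \<omega> i})"
  proof (intro set_eqI iffI)
    fix \<omega> assume "\<omega> \<in> {\<omega>\<in>space ?P. goodq M N c \<alpha> q \<omega>}"
    then have g: "goodq M N c \<alpha> q \<omega>" and w: "\<omega> \<in> space ?P" by auto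
    show "\<omega> \<in> (\<Union>S\<in>F. {\<omega>\<in>space ?P. \<forall>i\<in>S. c * nsq M q \<le> val M q \<omega> i})"
      by (rule UN_I[of "{i\<in>{..<N}. c * nsq M q \<le> val M q \<omega> i}"]) (use g w in \<open>auto simp: goodq_def F_def\<close>)
  next
    fix \<omega> assume "\<omega> \<in> (\<Union>S\<in>F. {\<omega>\<in>space ?P. \<forall>i\<in>S. c * nsq M q \<le> val M q \<omega> i})"
    then obtain S where S: "S \<in> F" "\<omega> \<in> space ?P" "\<forall>i\<in>S. c * nsq M q \<le> val M q \<omega> i" by auto
    then have "S \<subseteq> {i\<in>{..<N}. c * nsq M q \<le> val M q \<omega> i}" by (auto simp: F_def)
    then have "card S \<le> card {i\<in>{..<N}. c * nsq M q \<le> val M q \<omega> i}" by (intro card_mono) auto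
    then show "\<omega> \<in> {\<omega>\<in>space ?P. goodq M N c \<alpha> q \<omega>}" using S by (auto simp: goodq_def F_def)
  qed
  have each: "{\<omega>\<in>space ?P. \<forall>i\<in>S. c * nsq M q \<le> val M q \<omega> i} \<in> sets ?P" if "S \<in> F" for S
  proof -
    have fS: "finite S" and Si: "\<And>i. i \<in> S \<Longrightarrow> i < N" using that by (auto simp: F_def intro: finite_subset)
    have "{\<omega>\<in>space ?P. \<forall>i\<in>S. c * nsq M q \<le> val M q \<omega> i} = space ?P \<inter> (\<Inter>i\<in>S. {\<omega>\<in>space ?P. c * nsq M q \<le> val M q \<omega> i})"
      by auto
    also have "\<dots> \<in> sets ?P"
    proof (cases "S = {}")
      case True then show ?thesis by simp
    next
      case False
      have "(\<Inter>i\<in>S. {\<omega>\<in>space ?P. c * nsq M q \<le> val M q \<omega> i}) \<in> sets ?P"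
        using fS False
      proof (intro sets.finite_INT)
        fix i assume "i \<in> S"
        then have i: "i < N" by (rule Si)
        show "{\<omega>\<in>space ?P. c * nsq M q \<le> val M q \<omega> i} \<in> sets ?P"
          using val_meas[OF i, of M q] by measurable
      qed auto
      then show ?thesis by auto
    qed
    finally show ?thesis .
  qed
  show ?thesis unfolding eq using finF each by (intro sets.finite_UN) auto
qed

lemma good_sets:
  assumes M: "0 < M" and a1: "\<alpha> \<le> 1"
  shows "{\<omega>\<in>space (gauss_matrix M N). \<forall>x\<in>unit_vecs M. \<alpha> * real N \<le> real (card {i\<in>{..<N}. c \<le> val M x \<omega> i})}
       \<in> sets (gauss_matrix M N)"
proof -
  let ?P = "gauss_matrix M N"
  have eq: "{\<omega>\<in>space ?P. \<forall>x\<in>unit_vecs M. \<alpha> * real N \<le> real (card {i\<in>{..<N}. c \<le> val M x \<omega> i})}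
     = space ?P \<inter> (\<Inter>q\<in>Dq M. {\<omega>\<in>space ?P. goodq M N c \<alpha> q \<omega>})"
    using good_iff_dense[OF M a1] by auto
  have "(\<Inter>q\<in>Dq M. {\<omega>\<in>space ?P. goodq M N c \<alpha> q \<omega>}) \<in> sets ?P"
  proof (rule sets.countable_INT')
    have "restrict (\<lambda>_. 0) {..<M} \<in> Dq M" by (auto simp: Dq_def QC_def complex_eq_iff intro!: exI[of _ 0])
    then show "Dq M \<noteq> {}" by auto
  qed (auto simp: countable_Dq goodq_sets)
  then show ?thesis unfolding eq by auto
qed

definition G :: "real \<Rightarrow> int \<Rightarrow> complex set" where
  "G h K = (\<lambda>(a, b). Complex (h * of_int a) (h * of_int b)) ` ({-K..K} \<times> {-K..K})"

definition Ynet :: "nat \<Rightarrow> real \<Rightarrow> int \<Rightarrow> (nat \<Rightarrow> complex) set" where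
  "Ynet M h K = {y. (\<forall>j<M. y j \<in> G h K) \<and> (\<forall>j. M \<le> j \<longrightarrow> y j = 0)}"

lemma finite_G: "finite (G h K)" by (simp add: G_def)

lemma card_G: "card (G h K) \<le> nat (2 * K + 1) ^ 2"
proof -
  have "card (G h K) \<le> card ({-K..K} \<times> {-K..K})" unfolding G_def by (rule card_image_le) simp
  also have "\<dots> = nat (2 * K + 1) ^ 2" by (simp add: card_cartesian_product power2_eq_square)
  finally show ?thesis .
qed

lemma Ynet_card: "finite (Ynet M h K) \<and> card (Ynet M h K) \<le> nat (2 * K + 1) ^ (2 * M)"
proof -
  let ?f = "\<lambda>y. restrict y {..<M}"
  have inj: "inj_on ?f (Ynet M h K)"
  proof
    fix y1 y2 assume y: "y1 \<in> Ynet M h K" "y2 \<in> Ynet M h K" and eq: "?f y1 = ?f y2"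
    show "y1 = y2"
    proof
      fix j show "y1 j = y2 j"
      proof (cases "j < M")
        case True then show ?thesis using fun_cong[OF eq, of j] by simp
      next
        case False then show ?thesis using y by (simp add: Ynet_def)
      qed
    qed
  qed
  have sub: "?f ` Ynet M h K \<subseteq> PiE {..<M} (\<lambda>_. G h K)" by (rule image_subsetI) (simp add: Ynet_def restrict_PiE_iff)
  have finP: "finite (PiE {..<M} (\<lambda>_. G h K))" by (simp add: finite_PiE finite_G)
  have fin: "finite (Ynet M h K)" using finite_subset[OF sub finP] inj by (rule finite_imageD)
  have "card (Ynet M h K) = card (?f ` Ynet M h K)" using inj by (simp add: card_image)
  also have "\<dots> \<le> card (PiE {..<M} (\<lambda>_. G h K))" by (rule card_mono[OF finP sub])
  also have "\<dots> = card (G h K) ^ M" by (simp add: card_PiE)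
  also have "\<dots> \<le> (nat (2 * K + 1) ^ 2) ^ M" by (rule power_mono[OF card_G]) simp
  also have "\<dots> = nat (2 * K + 1) ^ (2 * M)" by (simp add: power_mult)
  finally show ?thesis using fin by simp
qed

definition rnd :: "nat \<Rightarrow> real \<Rightarrow> (nat \<Rightarrow> complex) \<Rightarrow> nat \<Rightarrow> complex" where
  "rnd M h x j = (if j < M then Complex (h * of_int (round (Re (x j) / h))) (h * of_int (round (Im (x j) / h))) else 0)"

lemma round_err: assumes h: "0 < h" shows "\<bar>h * of_int (round (u / h)) - u\<bar> \<le> h / 2"
proof -
  have "h * of_int (round (u / h)) - u = h * (of_int (round (u / h)) - u / h)" using h by (simp add: algebra_simps)
  then have "\<bar>h * of_int (round (u / h)) - u\<bar> = h * \<bar>of_int (round (u / h)) - u / h\<bar>" using h by (simp add: abs_mult)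
  also have "\<dots> \<le> h * (1/2)" using h by (intro mult_left_mono of_int_round_abs_le) auto
  finally show ?thesis by simp
qed

lemma round_bound:
  fixes u h :: real
  assumes h: "0 < h" and u: "\<bar>u\<bar> \<le> 1" and K: "1 / h + 1 \<le> of_int K"
  shows "-K \<le> round (u / h) \<and> round (u / h) \<le> K"
proof -
  have "\<bar>(of_int (round (u / h))::real) - u / h\<bar> \<le> 1/2" by (rule of_int_round_abs_le)
  moreover have "\<bar>u / h\<bar> \<le> 1 / h" using u h by (simp add: abs_div divide_right_mono)
  ultimately have "\<bar>(of_int (round (u / h))::real)\<bar> < of_int K" using K by linarith
  then have "\<bar>round (u / h)\<bar> < K" by linarith
  then show ?thesis by linarith
qed

lemma sqlb:
  fixes a b h :: real
  assumes a0: "0 \<le> a" and a1: "a \<le> 1" and b0: "0 \<le> b" and ab: "a - h \<le> b" and h: "0 < h"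
  shows "a\<^sup>2 - 2 * h \<le> b\<^sup>2"
proof (cases "a \<le> h")
  case True
  have "a * a \<le> a * 1" using a0 a1 by (intro mult_left_mono) auto
  then have "a\<^sup>2 \<le> a * 1" by (simp add: power2_eq_square)
  then show ?thesis using True b0 by (smt (verit) zero_le_power2)
next
  case False
  then have "(a - h)\<^sup>2 \<le> b\<^sup>2" using ab by (intro power_mono) auto
  moreover have "a * h \<le> h" using a1 h by (simp add: mult_left_le_one_le)
  moreover have "(a - h)\<^sup>2 = a\<^sup>2 - 2 * (a * h) + h\<^sup>2" by (simp add: power2_eq_square algebra_simps)
  ultimately show ?thesis using zero_le_power2[of h] by linarith
qed

lemma rnd_props:
  assumes h: "0 < h" and x: "x \<in> unit_vecs M" and K: "1 / h + 1 \<le> of_int K"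
  shows "rnd M h x \<in> Ynet M h K"
    and "\<And>j. j < M \<Longrightarrow> cmod (rnd M h x j - x j) \<le> h"
    and "1 - 2 * h * real M \<le> nsq M (rnd M h x)"
proof -
  have reim: "\<bar>Re (x j)\<bar> \<le> 1 \<and> \<bar>Im (x j)\<bar> \<le> 1" if "j < M" for j
    using unit_le1[OF x that] abs_Re_le_cmod[of "x j"] abs_Im_le_cmod[of "x j"] by linarith
  show "rnd M h x \<in> Ynet M h K"
  proof -
    have "rnd M h x j \<in> G h K" if j: "j < M" for j
    proof -
      have "round (Re (x j) / h) \<in> {-K..K}" "round (Im (x j) / h) \<in> {-K..K}"
        using round_bound[OF h _ K] reim[OF j] by auto
      then show ?thesis unfolding G_def rnd_def using j
        by (intro image_eqI[of _ _ "(round (Re (x j) / h), round (Im (x j) / h))"]) auto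
    qed
    then show ?thesis by (auto simp: Ynet_def rnd_def)
  qed
  show err: "cmod (rnd M h x j - x j) \<le> h" if j: "j < M" for j
  proof -
    have "cmod (rnd M h x j - x j) \<le> \<bar>Re (rnd M h x j - x j)\<bar> + \<bar>Im (rnd M h x j - x j)\<bar>" by (rule cmod_le)
    also have "\<dots> \<le> h / 2 + h / 2"
      using round_err[OF h, of "Re (x j)"] round_err[OF h, of "Im (x j)"] j by (simp add: rnd_def)
    finally show ?thesis by simp
  qed
  have each: "(cmod (x j))\<^sup>2 - 2 * h \<le> (cmod (rnd M h x j))\<^sup>2" if j: "j < M" for j
  proof (rule sqlb[OF _ unit_le1[OF x j] _ _ h])
    have "cmod (x j) - cmod (rnd M h x j) \<le> cmod (x j - rnd M h x j)" by (rule norm_triangle_ineq2)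
    also have "\<dots> = cmod (rnd M h x j - x j)" by (simp add: norm_minus_commute)
    finally show "cmod (x j) - h \<le> cmod (rnd M h x j)" using err[OF j] by linarith
  qed auto
  have "1 - 2 * h * real M = (\<Sum>j<M. (cmod (x j))\<^sup>2 - 2 * h)"
    using x by (simp add: unit_vecs_def sum_subtractf)
  also have "\<dots> \<le> nsq M (rnd M h x)" unfolding nsq_def by (rule sum_mono) (use each in auto)
  finally show "1 - 2 * h * real M \<le> nsq M (rnd M h x)" .
qed

lemma small_col:
  assumes h0: "0 \<le> h" and w: "\<And>j. j < M \<Longrightarrow> \<bar>Re (\<omega> (j, i))\<bar> \<le> 1 \<and> \<bar>Im (\<omega> (j, i))\<bar> \<le> 1"
    and yx: "\<And>j. j < M \<Longrightarrow> cmod (y j - x j) \<le> h"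
    and v: "val M x \<omega> i < c" and hc: "2 * h * real M \<le> sqrt c"
  shows "\<bar>FF M y i \<omega>\<bar> < 2 * sqrt c"
proof -
  let ?z = "\<lambda>j. \<omega> (j, i)"
  have "FF M y i \<omega> = Re (cinner M y ?z)" by (simp add: FF_def Re_cinner)
  then have "\<bar>FF M y i \<omega>\<bar> \<le> cmod (cinner M y ?z)" by (simp add: abs_Re_le_cmod)
  also have "\<dots> \<le> cmod (cinner M x ?z) + cmod (cinner M y ?z - cinner M x ?z)" by (rule norm_triangle_sub)
  also have "cmod (cinner M y ?z - cinner M x ?z) \<le> 2 * h * real M"
  proof -
    have "cmod (cinner M y ?z - cinner M x ?z) \<le> (\<Sum>j<M. cmod (y j - x j) * cmod (?z j))"
      unfolding cinner_diff by (rule cinner_bound)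
    also have "\<dots> \<le> (\<Sum>j<M. h * 2)"
    proof (rule sum_mono)
      fix j assume j: "j \<in> {..<M}"
      have "cmod (?z j) \<le> \<bar>Re (?z j)\<bar> + \<bar>Im (?z j)\<bar>" by (rule cmod_le)
      also have "\<dots> \<le> 2" using w[of j] j by simp
      finally show "cmod (y j - x j) * cmod (?z j) \<le> h * 2"
        using yx[of j] j h0 by (intro mult_mono) auto
    qed
    also have "\<dots> = 2 * h * real M" by simp
    finally show ?thesis .
  qed
  also have "cmod (cinner M x ?z) < sqrt c"
    by (rule real_less_rsqrt) (use v in \<open>simp add: val_def\<close>)
  finally show ?thesis using hc by linarith
qed

lemma count_sets:
  fixes N :: nat
  assumes A: "\<And>i. i < N \<Longrightarrow> A i \<in> sets P"
  shows "{\<omega>\<in>space P. m \<le> card {i\<in>{..<N}. \<omega> \<in> A i}} \<in> sets P"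
proof -
  define F where "F = {S. S \<subseteq> {..<N} \<and> m \<le> card S}"
  have finF: "finite F" unfolding F_def by (rule finite_subset[of _ "Pow {..<N}"]) auto
  have eq: "{\<omega>\<in>space P. m \<le> card {i\<in>{..<N}. \<omega> \<in> A i}} = (\<Union>S\<in>F. space P \<inter> (\<Inter>i\<in>S. A i))"
  proof (intro set_eqI iffI)
    fix \<omega> assume "\<omega> \<in> {\<omega>\<in>space P. m \<le> card {i\<in>{..<N}. \<omega> \<in> A i}}"
    then show "\<omega> \<in> (\<Union>S\<in>F. space P \<inter> (\<Inter>i\<in>S. A i))"
      by (intro UN_I[of "{i\<in>{..<N}. \<omega> \<in> A i}"]) (auto simp: F_def)
  next
    fix \<omega> assume "\<omega> \<in> (\<Union>S\<in>F. space P \<inter> (\<Inter>i\<in>S. A i))"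
    then obtain S where S: "S \<in> F" "\<omega> \<in> space P" "\<forall>i\<in>S. \<omega> \<in> A i" by auto
    then have "S \<subseteq> {i\<in>{..<N}. \<omega> \<in> A i}" by (auto simp: F_def)
    then have "card S \<le> card {i\<in>{..<N}. \<omega> \<in> A i}" by (intro card_mono) auto
    then show "\<omega> \<in> {\<omega>\<in>space P. m \<le> card {i\<in>{..<N}. \<omega> \<in> A i}}" using S by (auto simp: F_def)
  qed
  have each: "space P \<inter> (\<Inter>i\<in>S. A i) \<in> sets P" if "S \<in> F" for S
  proof (cases "S = {}")
    case True then show ?thesis by simp
  next
    case False
    have fS: "finite S" using that by (auto simp: F_def intro: finite_subset)
    have "(\<Inter>i\<in>S. A i) \<in> sets P" using fS False that A by (intro sets.finite_INT) (auto simp: F_def)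
    then show ?thesis by auto
  qed
  show ?thesis unfolding eq using finF each by (intro sets.finite_UN) auto
qed

lemma main_M:
  assumes M: "0 < M" and N: "0 < N" and a0: "0 < \<alpha>" and a1: "\<alpha> < 1"
    and Cp: "0 < Cp" and Cp1: "Cp \<le> 1/16"
  shows "1 - (2 * real M * real N * (sqrt 2 * exp (- (real M / 2)))
            + real (nat (2 * (\<lceil>2 * real M / sqrt (Cp / real M)\<rceil> + 1) + 1) ^ (2 * M))
              * (2 ^ N * (4 * sqrt Cp) ^ (nat \<lfloor>(1 - \<alpha>) * real N\<rfloor> + 1)))
         \<le> measure (gauss_matrix M N) {\<omega> \<in> space (gauss_matrix M N). Cp / real M \<le> PU M N \<omega> \<alpha>}"
proof -
  let ?P = "gauss_matrix M N"
  interpret P: prob_space ?P by (rule gm_prob[OF M])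
  define c where "c = Cp / real M"
  define h where "h = sqrt c / (2 * real M)"
  define K where "K = \<lceil>1 / h\<rceil> + 1"
  define m where "m = nat \<lfloor>(1 - \<alpha>) * real N\<rfloor> + 1"
  define q where "q = 4 * sqrt Cp"
  define r where "r = 2 * sqrt c"
  have Mr: "1 \<le> real M" using M by simp
  have c0: "0 < c" using Cp M by (simp add: c_def)
  have cCp: "c \<le> Cp" unfolding c_def using Cp Mr by (simp add: divide_le_eq)
  have sc: "sqrt c \<le> 1/4"
  proof -
    have "sqrt c \<le> sqrt (1/16)" using cCp Cp1 by (intro real_sqrt_le_mono) simp
    also have "sqrt (1/16) = (1/4::real)" by (simp add: real_sqrt_divide)
    finally show ?thesis .
  qed
  have hpos: "0 < h" using c0 M by (simp add: h_def)
  have h2M: "2 * h * real M = sqrt c" using M by (simp add: h_def)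
  have invh: "1 / h = 2 * real M / sqrt (Cp / real M)" using M by (simp add: h_def c_def)
  have Kh: "1 / h + 1 \<le> of_int K" unfolding K_def by (simp add: ceiling_correct)
  have K_eq: "K = \<lceil>2 * real M / sqrt (Cp / real M)\<rceil> + 1" unfolding K_def invh ..
  have a1': "\<alpha> \<le> 1" using a1 by simp
  define Good where "Good = {\<omega>\<in>space ?P. \<forall>x\<in>unit_vecs M. \<alpha> * real N \<le> real (card {i\<in>{..<N}. c \<le> val M x \<omega> i})}"
  define E1 where "E1 = {\<omega>\<in>space ?P. \<exists>t\<in>({..<M}\<times>{..<N})\<times>UNIV. 1 < \<bar>XX t \<omega>\<bar>}"
  define By where "By y = {\<omega>\<in>space ?P. m \<le> card {i\<in>{..<N}. \<bar>FF M y i \<omega>\<bar> < r}}" for y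
  define Y' where "Y' = {y\<in>Ynet M h K. 1/2 \<le> nsq M y}"
  have target: "{\<omega> \<in> space ?P. Cp / real M \<le> PU M N \<omega> \<alpha>} = Good"
    unfolding Good_def c_def[symmetric] using PU_iff[OF M N a0 a1'] by auto
  have Gs: "Good \<in> sets ?P" unfolding Good_def by (rule good_sets[OF M a1'])
  have E1s: "E1 \<in> sets ?P"
  proof -
    have "E1 = (\<Union>t\<in>({..<M}\<times>{..<N})\<times>UNIV. {\<omega>\<in>space ?P. 1 < \<bar>XX t \<omega>\<bar>})" unfolding E1_def by auto
    also have "\<dots> \<in> sets ?P"
    proof (intro sets.finite_UN)
      fix t assume t: "t \<in> ({..<M}\<times>{..<N})\<times>(UNIV::bool set)"
      then have "fst t \<in> {..<M}\<times>{..<N}" by auto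
      note [measurable] = XX_meas[OF this]
      show "{\<omega>\<in>space ?P. 1 < \<bar>XX t \<omega>\<bar>} \<in> sets ?P" by measurable
    qed auto
    finally show ?thesis .
  qed
  have Bys: "By y \<in> sets ?P" for y
  proof -
    define A where "A i = {\<omega>\<in>space ?P. \<bar>FF M y i \<omega>\<bar> < r}" for i
    have A: "A i \<in> sets ?P" if "i < N" for i
    proof -
      note [measurable] = FF_meas[OF that, of M y]
      show ?thesis unfolding A_def by measurable
    qed
    have "By y = {\<omega>\<in>space ?P. m \<le> card {i\<in>{..<N}. \<omega> \<in> A i}}"
      unfolding By_def A_def by auto
    also have "\<dots> \<in> sets ?P" by (rule count_sets[OF A])
    finally show ?thesis .
  qed
  have finY: "finite Y'" using Ynet_card[of M h K] unfolding Y'_def by auto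
  have cover: "space ?P - Good \<subseteq> E1 \<union> (\<Union>y\<in>Y'. By y)"
  proof
    fix \<omega> assume w: "\<omega> \<in> space ?P - Good"
    show "\<omega> \<in> E1 \<union> (\<Union>y\<in>Y'. By y)"
    proof (cases "\<omega> \<in> E1")
      case True then show ?thesis by simp
    next
      case False
      have wsp: "\<omega> \<in> space ?P" using w by simp
      have ent: "\<bar>Re (\<omega> (j, i))\<bar> \<le> 1 \<and> \<bar>Im (\<omega> (j, i))\<bar> \<le> 1" if "j < M" "i < N" for j i
      proof -
        have "\<not> 1 < \<bar>XX ((j,i),True) \<omega>\<bar>" "\<not> 1 < \<bar>XX ((j,i),False) \<omega>\<bar>"
          using False wsp that unfolding E1_def by auto
        then show ?thesis by (simp add: XX_def)
      qed
      obtain x where x: "x \<in> unit_vecs M" and bad: "real (card {i\<in>{..<N}. c \<le> val M x \<omega> i}) < \<alpha> * real N"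
        using w unfolding Good_def by (auto simp: not_le)
      let ?L = "{i\<in>{..<N}. c \<le> val M x \<omega> i}"
      let ?Ks = "{i\<in>{..<N}. val M x \<omega> i < c}"
      define y where "y = rnd M h x"
      have yY: "y \<in> Ynet M h K" unfolding y_def by (rule rnd_props(1)[OF hpos x Kh])
      have yerr: "\<And>j. j < M \<Longrightarrow> cmod (y j - x j) \<le> h" unfolding y_def by (rule rnd_props(2)[OF hpos x Kh])
      have ynsq: "1/2 \<le> nsq M y"
        using rnd_props(3)[OF hpos x Kh] h2M sc unfolding y_def by linarith
      have yY': "y \<in> Y'" using yY ynsq by (simp add: Y'_def)
      have KsL: "?Ks = {..<N} - ?L" by auto
      have cardKs: "card ?Ks = N - card ?L" unfolding KsL by (subst card_Diff_subset) auto
      have cardL: "card ?L \<le> N" by (rule order_trans[OF card_mono[of "{..<N}"]]) auto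
      have rKs: "(1 - \<alpha>) * real N < real (card ?Ks)"
        using cardKs cardL bad by (simp add: of_nat_diff algebra_simps)
      have fle: "(of_int \<lfloor>(1 - \<alpha>) * real N\<rfloor> :: real) \<le> (1 - \<alpha>) * real N" by (rule of_int_floor_le)
      have "(of_int \<lfloor>(1 - \<alpha>) * real N\<rfloor> :: real) < real (card ?Ks)"
        using fle rKs by linarith
      then have fl: "\<lfloor>(1 - \<alpha>) * real N\<rfloor> < int (card ?Ks)" by (metis of_int_less_iff of_int_of_nat_eq)
      have fl0: "0 \<le> \<lfloor>(1 - \<alpha>) * real N\<rfloor>" using a1 by simp
      have mKs: "m \<le> card ?Ks" unfolding m_def using fl fl0 by linarith
      have "?Ks \<subseteq> {i\<in>{..<N}. \<bar>FF M y i \<omega>\<bar> < r}"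
      proof
        fix i assume i: "i \<in> ?Ks"
        have "\<bar>FF M y i \<omega>\<bar> < 2 * sqrt c"
          by (rule small_col[where x=x and h=h]) (use hpos ent i yerr h2M in auto)
        then show "i \<in> {i\<in>{..<N}. \<bar>FF M y i \<omega>\<bar> < r}" using i by (simp add: r_def)
      qed
      then have "card ?Ks \<le> card {i\<in>{..<N}. \<bar>FF M y i \<omega>\<bar> < r}" by (intro card_mono) auto
      then have "\<omega> \<in> By y" using mKs wsp unfolding By_def by auto
      then show ?thesis using yY' by auto
    qed
  qed
  have ByB: "P.prob (By y) \<le> 2 ^ N * q ^ m" if y: "y \<in> Y'" for y
  proof -
    have ny: "1/2 \<le> nsq M y" using y by (simp add: Y'_def)
    have S2: "0 < (\<Sum>j<M. (cmod (y j))\<^sup>2)" using ny by (simp add: nsq_def)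
    define s where "s = sqrt (1/real M/2) * sqrt (\<Sum>j<M. (cmod (y j))\<^sup>2)"
    have spos: "0 < s" using S2 M by (simp add: s_def)
    have r0: "0 \<le> r" using c0 by (simp add: r_def)
    have m0: "0 < m" by (simp add: m_def)
    have "P.prob (By y) \<le> 2 ^ N * (r / s) ^ m"
      unfolding By_def s_def by (rule By_bound[OF M N S2 r0 m0])
    also have "(r / s) ^ m \<le> q ^ m"
    proof (rule power_mono)
      have "r = 4 * sqrt Cp * (sqrt (1/real M/2) * sqrt (1/2))"
      proof -
        have "sqrt (1/real M/2) * sqrt (1/2) = sqrt (1 / real M) / 2"
        proof -
          have s4: "sqrt 4 = (2::real)" using real_sqrt_abs[of 2] by simp
          have "sqrt (4 * real M) = 2 * sqrt (real M)" by (simp only: real_sqrt_mult s4)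
          then show ?thesis by (simp add: real_sqrt_mult[symmetric] real_sqrt_divide)
        qed
        then have e1: "sqrt (1 / real M) = 2 * (sqrt (1/real M/2) * sqrt (1/2))" by simp
        have "sqrt c = sqrt Cp * sqrt (1 / real M)" by (simp add: c_def real_sqrt_divide)
        then have "r = 2 * (sqrt Cp * sqrt (1 / real M))" by (simp add: r_def)
        also have "\<dots> = 2 * (sqrt Cp * (2 * (sqrt (1/real M/2) * sqrt (1/2))))" by (simp only: e1)
        also have "\<dots> = 4 * sqrt Cp * (sqrt (1/real M/2) * sqrt (1/2))" by (simp only: mult.assoc mult.left_commute)
        finally show ?thesis .
      qed
      also have "\<dots> \<le> 4 * sqrt Cp * s"
        unfolding s_def using ny Cp by (intro mult_left_mono real_sqrt_le_mono) (auto simp: nsq_def)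
      finally have "r \<le> q * s" by (simp add: q_def)
      then show "r / s \<le> q" using spos by (simp add: divide_le_eq)
      show "0 \<le> r / s" using r0 spos by simp
    qed
    then have "2 ^ N * (r / s) ^ m \<le> 2 ^ N * q ^ m" by simp
    finally show ?thesis .
  qed
  have "P.prob (space ?P - Good) \<le> P.prob (E1 \<union> (\<Union>y\<in>Y'. By y))"
    by (rule P.finite_measure_mono[OF cover]) (use E1s Bys finY in auto)
  also have "\<dots> \<le> P.prob E1 + P.prob (\<Union>y\<in>Y'. By y)"
    by (rule measure_Un_le) (use E1s Bys finY in auto)
  also have "P.prob (\<Union>y\<in>Y'. By y) \<le> (\<Sum>y\<in>Y'. P.prob (By y))"
    by (rule P.finite_measure_subadditive_finite) (use Bys finY in auto)
  also have "\<dots> \<le> (\<Sum>y\<in>Y'. 2 ^ N * q ^ m)" by (rule sum_mono) (rule ByB)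
  also have "\<dots> = real (card Y') * (2 ^ N * q ^ m)" by simp
  also have "\<dots> \<le> real (nat (2 * K + 1) ^ (2 * M)) * (2 ^ N * q ^ m)"
  proof (rule mult_right_mono)
    have "card Y' \<le> card (Ynet M h K)" using Ynet_card[of M h K] by (intro card_mono) (auto simp: Y'_def)
    also have "\<dots> \<le> nat (2 * K + 1) ^ (2 * M)" using Ynet_card[of M h K] by simp
    finally show "real (card Y') \<le> real (nat (2 * K + 1) ^ (2 * M))" by linarith
  qed (use Cp in \<open>simp add: q_def\<close>)
  also have "P.prob E1 \<le> 2 * real M * real N * (sqrt 2 * exp (- (real M / 2)))"
    unfolding E1_def by (rule E1_bound[OF M])
  finally have bad: "P.prob (space ?P - Good) \<le> 2 * real M * real N * (sqrt 2 * exp (- (real M / 2)))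
      + real (nat (2 * K + 1) ^ (2 * M)) * (2 ^ N * q ^ m)" by linarith
  have "P.prob (space ?P - Good) = 1 - P.prob Good" by (rule P.prob_compl[OF Gs])
  then show ?thesis using bad unfolding target K_eq[symmetric] q_def[symmetric] m_def[symmetric] by linarith
qed

lemma ev_Ea: "0 < (C::real) \<Longrightarrow> eventually (\<lambda>M::nat. 4 * sqrt 2 * C * real M * real M * ln (real M) * exp (-(real M/2)) \<le> 1/2 * exp (-(real M/4))) at_top"
  by real_asymp

lemma ev_Eb: "0 < (s::real) \<Longrightarrow> eventually (\<lambda>M::nat. exp (2 * real M * ln (4 * real M * sqrt (real M) / s + 5) - 5 * real M * ln (real M)) \<le> 1/2 * exp (-(real M/4))) at_top"
  by real_asymp

lemma ev_ln: "filterlim (\<lambda>M::nat. real M * ln (real M)) at_top at_top"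
  by real_asymp

lemma T2_bound:
  assumes M: "1 \<le> M" and C: "0 < C" and a1: "\<alpha> < 1" and Cp: "0 < Cp" and q0: "0 < q" and q1: "q < 1"
    and q4: "4 * sqrt Cp = q" and lnq: "ln q = - ((10 / C + 1) / (1 - \<alpha>))"
    and NL: "C * real M * ln (real M) / 2 \<le> real N"
  shows "real (nat (2 * (\<lceil>2 * real M / sqrt (Cp / real M)\<rceil> + 1) + 1) ^ (2 * M))
              * (2 ^ N * (4 * sqrt Cp) ^ (nat \<lfloor>(1 - \<alpha>) * real N\<rfloor> + 1))
         \<le> exp (2 * real M * ln (4 * real M * sqrt (real M) / sqrt Cp + 5) - 5 * real M * ln (real M))"
proof -
  define X where "X = 2 * real M / sqrt (Cp / real M)"
  define K where "K = \<lceil>X\<rceil> + 1"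
  define m where "m = nat \<lfloor>(1 - \<alpha>) * real N\<rfloor> + 1"
  define A where "A = 4 * real M * sqrt (real M) / sqrt Cp + 5"
  define L where "L = 10 / C"
  have Mr: "1 \<le> real M" using M by simp
  have Xpos: "0 < X" using M Cp by (simp add: X_def)
  have X2: "2 * X = 4 * real M * sqrt (real M) / sqrt Cp"
    using Mr Cp by (simp add: X_def real_sqrt_divide field_simps)
  have K0: "0 \<le> 2 * K + 1"
  proof -
    obtain z where z: "\<lceil>X\<rceil> = z" by blast
    have "0 < z" using Xpos z by auto
    then show ?thesis unfolding K_def z by auto
  qed
  have Apos: "0 < A" unfolding A_def using Mr Cp by (simp add: add_pos_nonneg)
  have KA: "real_of_int (2 * K + 1) \<le> A"
  proof -
    have "real_of_int \<lceil>X\<rceil> \<le> X + 1" by (rule of_int_ceiling_le_add_one)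
    moreover have "real_of_int (2 * K + 1) = 2 * real_of_int \<lceil>X\<rceil> + 3" by (simp add: K_def)
    ultimately show ?thesis unfolding A_def X2[symmetric] by linarith
  qed
  have "real (nat (2 * K + 1) ^ (2 * M)) = (real_of_int (2 * K + 1)) ^ (2 * M)"
    using K0 by (simp add: of_nat_power)
  also have "\<dots> \<le> A ^ (2 * M)" using K0 KA by (intro power_mono) auto
  also have "\<dots> = exp (2 * real M * ln A)"
    using ln_realpow[of A "2*M"] Apos exp_ln[of "A^(2*M)"] by simp
  finally have T2a: "real (nat (2 * K + 1) ^ (2 * M)) \<le> exp (2 * real M * ln A)" .
  have t0: "0 \<le> (1 - \<alpha>) * real N" using a1 by simp
  have mge: "(1 - \<alpha>) * real N \<le> real m"
  proof -
    have "(1 - \<alpha>) * real N < of_int \<lfloor>(1 - \<alpha>) * real N\<rfloor> + 1" using floor_correct[of "(1 - \<alpha>) * real N"] by simp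
    moreover have "of_int \<lfloor>(1 - \<alpha>) * real N\<rfloor> = real (nat \<lfloor>(1 - \<alpha>) * real N\<rfloor>)" using t0 by simp
    ultimately show ?thesis unfolding m_def by simp
  qed
  have lnq0: "ln q < 0" using q0 q1 by simp
  have "q ^ m = exp (real m * ln q)" using q0 by (simp add: exp_ln ln_realpow[symmetric] del: exp_ln_iff)
  also have "\<dots> \<le> exp ((1 - \<alpha>) * real N * ln q)"
    using mge lnq0 by (intro exp_mono mult_right_mono_neg) auto
  also have "(1 - \<alpha>) * real N * ln q = - ((L + 1) * real N)"
    using a1 by (simp add: lnq L_def field_simps)
  finally have qm: "q ^ m \<le> exp (- ((L + 1) * real N))" .
  have "(2::real) ^ N = exp (real N * ln 2)" by (simp add: exp_ln ln_realpow[symmetric] del: exp_ln_iff)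
  then have "2 ^ N * q ^ m \<le> exp (real N * ln 2) * exp (- ((L + 1) * real N))"
    using qm by (simp add: mult_left_mono)
  also have "\<dots> = exp (real N * ln 2 - (L + 1) * real N)" by (simp add: exp_add[symmetric])
  also have "\<dots> \<le> exp (- (5 * real M * ln (real M)))"
  proof (rule exp_mono)
    have "real N * ln 2 \<le> real N * 1" using ln_2_less_1 by (intro mult_left_mono) auto
    moreover have "5 * real M * ln (real M) \<le> L * real N"
    proof -
      have "L * (C * real M * ln (real M) / 2) \<le> L * real N" using NL C by (intro mult_left_mono) (auto simp: L_def)
      moreover have "L * (C * real M * ln (real M) / 2) = 5 * real M * ln (real M)" using C by (simp add: L_def field_simps)
      ultimately show ?thesis by linarith
    qed
    ultimately show "real N * ln 2 - (L + 1) * real N \<le> - (5 * real M * ln (real M))"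
      by (simp add: algebra_simps)
  qed
  finally have T2b: "2 ^ N * q ^ m \<le> exp (- (5 * real M * ln (real M)))" .
  have "real (nat (2 * K + 1) ^ (2 * M)) * (2 ^ N * q ^ m) \<le> exp (2 * real M * ln A) * exp (- (5 * real M * ln (real M)))"
    using T2a T2b q0 by (intro mult_mono) auto
  also have "\<dots> = exp (2 * real M * ln A - 5 * real M * ln (real M))" by (simp add: exp_add[symmetric])
  finally show ?thesis unfolding K_def X_def m_def A_def q4 .
qed

theorem lemma6p9:
  fixes C \<alpha> :: real and n :: "nat \<Rightarrow> nat"
  assumes "C > 0"
    and "(\<lambda>M. real (n M)) \<sim>[at_top] (\<lambda>M. C * real M * ln (real M))"
    and "0 < \<alpha>" and "\<alpha> < 1 - 1 / (2 * C)"
  shows "\<exists>C' > 0. \<exists>c0 > 0. \<exists>c1 > 0. \<forall>M \<ge> 1.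
           measure (gauss_matrix M (n M))
             {Phi \<in> space (gauss_matrix M (n M)). C' / real M \<le> PU M (n M) Phi \<alpha>}
           \<ge> 1 - c0 * exp (- c1 * real M)"
proof -
  have C: "0 < C" using assms(1) .
  have a0: "0 < \<alpha>" using assms(3) .
  have "0 < 1 / (2 * C)" using C by simp
  then have a1: "\<alpha> < 1" using assms(4) by linarith
  define L where "L = 10 / C"
  define q where "q = exp (- ((L + 1) / (1 - \<alpha>)))"
  define Cp where "Cp = (q / 4)\<^sup>2"
  have L0: "0 < L" using C by (simp add: L_def)
  have q0: "0 < q" by (simp add: q_def)
  have q1: "q < 1"
  proof -
    have "0 < (L + 1) / (1 - \<alpha>)" using L0 a1 by simp
    then show ?thesis unfolding q_def by simp
  qed
  have lnq: "ln q = - ((10 / C + 1) / (1 - \<alpha>))" by (simp add: q_def L_def)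
  have Cp0: "0 < Cp" using q0 by (simp add: Cp_def)
  have Cp1: "Cp \<le> 1/16"
  proof -
    have "(q / 4)\<^sup>2 \<le> (1/4)\<^sup>2" using q0 q1 by (intro power_mono) auto
    then show ?thesis by (simp add: Cp_def power2_eq_square)
  qed
  have sCp: "sqrt Cp = q / 4" using q0 by (simp add: Cp_def)
  have q4: "4 * sqrt Cp = q" using sCp by simp
  let ?g = "\<lambda>M::nat. C * real M * ln (real M)"
  have tl: "((\<lambda>M. if real (n M) = 0 \<and> ?g M = 0 then 1 else real (n M) / ?g M) \<longlongrightarrow> 1) at_top"
    by (rule asymp_equivD[OF assms(2)])
  have ev_lo: "eventually (\<lambda>M. 1/2 < (if real (n M) = 0 \<and> ?g M = 0 then 1 else real (n M) / ?g M)) at_top"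
    by (rule order_tendstoD(1)[OF tl]) simp
  have ev_hi: "eventually (\<lambda>M. (if real (n M) = 0 \<and> ?g M = 0 then 1 else real (n M) / ?g M) < 2) at_top"
    by (rule order_tendstoD(2)[OF tl]) simp
  have ev_2: "eventually (\<lambda>M::nat. 2 \<le> M) at_top" by (rule eventually_ge_at_top)
  have ev_big: "eventually (\<lambda>M::nat. 2 / C \<le> real M * ln (real M)) at_top"
    using ev_ln unfolding filterlim_at_top by blast
  have ev_N: "eventually (\<lambda>M. ?g M / 2 \<le> real (n M) \<and> real (n M) \<le> 2 * ?g M \<and> 1 \<le> ?g M / 2) at_top"
    using ev_lo ev_hi ev_2 ev_big
  proof eventually_elim
    case (elim M)
    have lnM: "0 < ln (real M)" using elim(3) by simp
    have gpos: "0 < ?g M" using C lnM elim(3) by simp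
    then have ne: "\<not> (real (n M) = 0 \<and> ?g M = 0)" by (metis less_irrefl)
    have r1: "1/2 < real (n M) / ?g M" using elim(1) unfolding if_not_P[OF ne] .
    have r2: "real (n M) / ?g M < 2" using elim(2) unfolding if_not_P[OF ne] .
    have "?g M / 2 \<le> real (n M)" using r1 gpos by (simp add: field_simps)
    moreover have "real (n M) \<le> 2 * ?g M" using r2 gpos by (simp add: field_simps)
    moreover have "1 \<le> ?g M / 2"
    proof -
      have "C * (2 / C) \<le> C * (real M * ln (real M))" using elim(4) C by (intro mult_left_mono) auto
      then show ?thesis using C by (simp add: field_simps)
    qed
    ultimately show ?case by blast
  qed
  have ev_all: "eventually (\<lambda>M. (?g M / 2 \<le> real (n M) \<and> real (n M) \<le> 2 * ?g M \<and> 1 \<le> ?g M / 2)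
      \<and> 4 * sqrt 2 * C * real M * real M * ln (real M) * exp (-(real M/2)) \<le> 1/2 * exp (-(real M/4))
      \<and> exp (2 * real M * ln (4 * real M * sqrt (real M) / sqrt Cp + 5) - 5 * real M * ln (real M)) \<le> 1/2 * exp (-(real M/4))
      \<and> 1 \<le> M) at_top"
  proof -
    have ev_Eb': "eventually (\<lambda>M::nat. exp (2 * real M * ln (4 * real M * sqrt (real M) / sqrt Cp + 5) - 5 * real M * ln (real M)) \<le> 1/2 * exp (-(real M/4))) at_top"
      by (rule ev_Eb) (use Cp0 in simp)
    show ?thesis
      by (rule eventually_conj[OF ev_N eventually_conj[OF ev_Ea[OF C] eventually_conj[OF ev_Eb' eventually_ge_at_top]]])
  qed
  then obtain M0 where M0: "\<And>M. M \<ge> M0 \<Longrightarrow> (?g M / 2 \<le> real (n M) \<and> real (n M) \<le> 2 * ?g M \<and> 1 \<le> ?g M / 2)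
      \<and> 4 * sqrt 2 * C * real M * real M * ln (real M) * exp (-(real M/2)) \<le> 1/2 * exp (-(real M/4))
      \<and> exp (2 * real M * ln (4 * real M * sqrt (real M) / sqrt Cp + 5) - 5 * real M * ln (real M)) \<le> 1/2 * exp (-(real M/4))
      \<and> 1 \<le> M"
    unfolding eventually_at_top_linorder by blast
  define c0 where "c0 = exp (real M0 / 4)"
  have c01: "1 \<le> c0" by (simp add: c0_def)
  have main_all: "\<forall>M\<ge>1. 1 - c0 * exp (- (1/4) * real M) \<le> measure (gauss_matrix M (n M))
             {Phi \<in> space (gauss_matrix M (n M)). Cp / real M \<le> PU M (n M) Phi \<alpha>}"
  proof (intro allI impI)
    fix M :: nat assume M1: "1 \<le> M"
    let ?P = "gauss_matrix M (n M)"
    let ?S = "{Phi \<in> space ?P. Cp / real M \<le> PU M (n M) Phi \<alpha>}"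
    show "1 - c0 * exp (- (1/4) * real M) \<le> measure ?P ?S"
    proof (cases "M < M0")
      case True
      have "c0 * exp (- (1/4) * real M) = exp (real M0 / 4 - real M / 4)"
        by (simp add: c0_def exp_add[symmetric] exp_diff)
      also have "\<dots> \<ge> 1" using True by simp
      finally have "1 - c0 * exp (- (1/4) * real M) \<le> 0" by simp
      then show ?thesis using measure_nonneg[of ?P ?S] by linarith
    next
      case False
      then have MM: "M \<ge> M0" by simp
      note H = M0[OF MM]
      define N where "N = n M"
      have NL: "?g M / 2 \<le> real N" and NU: "real N \<le> 2 * ?g M" and g1: "1 \<le> ?g M / 2"
        using H by (auto simp: N_def)
      have N0: "0 < N" using NL g1 by simp
      have M0': "0 < M" using M1 by simp
      have main: "1 - (2 * real M * real N * (sqrt 2 * exp (- (real M / 2)))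
            + real (nat (2 * (\<lceil>2 * real M / sqrt (Cp / real M)\<rceil> + 1) + 1) ^ (2 * M))
              * (2 ^ N * (4 * sqrt Cp) ^ (nat \<lfloor>(1 - \<alpha>) * real N\<rfloor> + 1)))
         \<le> measure (gauss_matrix M N) {\<omega> \<in> space (gauss_matrix M N). Cp / real M \<le> PU M N \<omega> \<alpha>}"
        by (rule main_M[OF M0' N0 a0 a1 Cp0 Cp1])
      have T1: "2 * real M * real N * (sqrt 2 * exp (- (real M / 2))) \<le> 1/2 * exp (-(real M/4))"
      proof -
        have "2 * real M * real N * (sqrt 2 * exp (- (real M / 2))) \<le> 2 * real M * (2 * ?g M) * (sqrt 2 * exp (- (real M / 2)))"
          using NU by (intro mult_right_mono mult_left_mono) auto
        also have "\<dots> = 4 * sqrt 2 * C * real M * real M * ln (real M) * exp (-(real M/2))" by simp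
        also have "\<dots> \<le> 1/2 * exp (-(real M/4))" using H by blast
        finally show ?thesis .
      qed
      have T2: "real (nat (2 * (\<lceil>2 * real M / sqrt (Cp / real M)\<rceil> + 1) + 1) ^ (2 * M))
              * (2 ^ N * (4 * sqrt Cp) ^ (nat \<lfloor>(1 - \<alpha>) * real N\<rfloor> + 1)) \<le> 1/2 * exp (-(real M/4))"
        using T2_bound[OF M1 C a1 Cp0 q0 q1 q4 lnq NL] H by linarith
      have "exp (-(real M/4)) \<le> c0 * exp (- (1/4) * real M)" using c01 by simp
      then show ?thesis using main T1 T2 unfolding N_def by linarith
    qed
  qed
  show ?thesis
    apply (rule exI[of _ Cp])
    apply (rule conjI[OF Cp0])
    apply (rule exI[of _ c0])
    apply (rule conjI)
    using c01 apply simp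
    apply (rule exI[of _ "1/4"])
    apply (rule conjI)
     apply simp
    using main_all by simp
qed

end
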